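(* Let $R_V>0$ and $\delta\in(0,1)$. (1) For any fixed $x\in\mathbb{R}^d$, with probability at least $1-3\delta$, every $V\in\mathbb{R}^{m\times d}$ satisfies \[ |\langle\nabla f(x;W_0),V\rangle|\le\rho\|x\|\big(\|V-W_0\|+2\ln(1/\delta)\big). \] (2) Suppose $R_V\ge1$ and $m\ge\ln(emd)$. With probability at least $1-(1+3(md^{3/2})^d)\delta$, \[ \sup_{\|V-W_0\|\le R_V}\ \sup_{\|x\|\le1}|\langle\nabla f(x;W_0),V\rangle|\le18R_V\rho\ln(emd/\delta). \]
   Context: Network: width $m$, temperature $\rho>0$, $a_1,\dots,a_m$ i.i.d. uniform in $\{\pm1\}$, $W_0\in\mathbb{R}^{m\times d}$ with i.i.d. $\mathcal N(0,1)$ entries, independent of $a$. For $W$ with rows $w_j^\top$, $\nabla f(x;W)=\frac{\rho}{\sqrt m}\sum_ja_j\mathbf 1[w_j^\top x\ge0]e_jx^\top$. $\langle A,B\rangle=\mathrm{tr}(A^\top B)$, $\|\cdot\|$ Frobenius/Euclidean norm. Probabilities are over $a$ and $W_0$. *)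

theory Defs
  imports "HOL-Probability.Probability"
begin

text \<open>Vectors/matrices are
  functions on indices; only indices j < m, k < d are relevant.\<close>

definition rademacher_vec :: "nat \<Rightarrow> (nat \<Rightarrow> real) measure" where
  "rademacher_vec m = PiM {..<m} (\<lambda>_. measure_pmf (pmf_of_set {-1, 1::real}))"

definition gauss_mat :: "nat \<Rightarrow> nat \<Rightarrow> (nat \<times> nat \<Rightarrow> real) measure" where
  "gauss_mat m d = PiM ({..<m} \<times> {..<d}) (\<lambda>_. std_normal_distribution)"

definition init_measure :: "nat \<Rightarrow> nat \<Rightarrow> ((nat \<Rightarrow> real) \<times> (nat \<times> nat \<Rightarrow> real)) measure" where
  "init_measure m d = rademacher_vec m \<Otimes>\<^sub>M gauss_mat m d"

definition fro_norm :: "nat \<Rightarrow> nat \<Rightarrow> (nat \<times> nat \<Rightarrow> real) \<Rightarrow> real" where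
  "fro_norm m d V = sqrt (\<Sum>j<m. \<Sum>k<d. (V (j, k))\<^sup>2)"

definition vec_norm :: "nat \<Rightarrow> (nat \<Rightarrow> real) \<Rightarrow> real" where
  "vec_norm d x = sqrt (\<Sum>k<d. (x k)\<^sup>2)"

definition grad_f :: "real \<Rightarrow> nat \<Rightarrow> nat \<Rightarrow> (nat \<Rightarrow> real) \<Rightarrow> (nat \<times> nat \<Rightarrow> real)
    \<Rightarrow> (nat \<Rightarrow> real) \<Rightarrow> (nat \<times> nat \<Rightarrow> real)" where
  "grad_f \<rho> m d a W x = (\<lambda>(j, k). \<rho> / sqrt (real m) * a j *
      (if (\<Sum>i<d. W (j, i) * x i) \<ge> 0 then 1 else 0) * x k)"

definition frob_inner :: "nat \<Rightarrow> nat \<Rightarrow> (nat \<times> nat \<Rightarrow> real) \<Rightarrow> (nat \<times> nat \<Rightarrow> real) \<Rightarrow> real" where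
  "frob_inner m d A B = (\<Sum>j<m. \<Sum>k<d. A (j, k) * B (j, k))"

end

theory Submission
  imports Defs
begin

lemma gauss_mgf:
  "(\<integral>\<^sup>+t. ennreal (exp (c*t)) \<partial>std_normal_distribution) = ennreal (exp (c\<^sup>2/2))"
proof -
  have eq: "std_normal_density t * exp (c*t) = exp (c\<^sup>2/2) * normal_density c 1 t" for t
  proof -
    have "exp (c*t) * exp (- t\<^sup>2/2) = exp (c\<^sup>2/2) * exp (-(t - c)\<^sup>2/2)"
      by (simp add: mult_exp_exp power2_eq_square algebra_simps add_divide_distrib diff_divide_distrib)
    then show ?thesis unfolding normal_density_def by (simp add: algebra_simps)
  qed
  have "(\<integral>\<^sup>+t. ennreal (exp (c*t)) \<partial>std_normal_distribution)
      = (\<integral>\<^sup>+t. ennreal (std_normal_density t) * ennreal (exp (c*t)) \<partial>lborel)"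
    by (subst nn_integral_density) auto
  also have "\<dots> = (\<integral>\<^sup>+t. ennreal (exp (c\<^sup>2/2)) * ennreal (normal_density c 1 t) \<partial>lborel)"
    by (intro nn_integral_cong) (simp add: ennreal_mult'[symmetric] eq)
  also have "\<dots> = ennreal (exp (c\<^sup>2/2)) * (\<integral>\<^sup>+t. ennreal (normal_density c 1 t) \<partial>lborel)"
    by (rule nn_integral_cmult) auto
  also have "(\<integral>\<^sup>+t. ennreal (normal_density c 1 t) \<partial>lborel) = 1"
    using prob_space.emeasure_space_1[OF prob_space_normal_density[of 1 c]]
    by (simp add: emeasure_density)
  finally show ?thesis by simp
qed

lemma prob_std_normal: "prob_space std_normal_distribution"
  using prob_space_normal_density[of 1 0] by simp

lemma gauss_prod_mgf:
  assumes "finite I"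
  shows "(\<integral>\<^sup>+W. ennreal (exp (\<Sum>p\<in>I. c p * W p)) \<partial>PiM I (\<lambda>_. std_normal_distribution))
         = ennreal (exp (\<Sum>p\<in>I. (c p)\<^sup>2/2))"
proof -
  interpret product_prob_space "\<lambda>_. std_normal_distribution" I
    by (intro product_prob_spaceI prob_std_normal)
  have "(\<integral>\<^sup>+W. ennreal (exp (\<Sum>p\<in>I. c p * W p)) \<partial>PiM I (\<lambda>_. std_normal_distribution))
      = (\<integral>\<^sup>+W. (\<Prod>p\<in>I. (\<lambda>p t. ennreal (exp (c p * t))) p (W p)) \<partial>PiM I (\<lambda>_. std_normal_distribution))"
    by (intro nn_integral_cong) (simp add: exp_sum[OF assms] prod_ennreal)
  also have "\<dots> = (\<Prod>p\<in>I. \<integral>\<^sup>+t. ennreal (exp (c p * t)) \<partial>std_normal_distribution)"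
    by (rule product_nn_integral_prod[OF assms]) simp
  also have "\<dots> = (\<Prod>p\<in>I. ennreal (exp ((c p)\<^sup>2/2)))"
    by (simp add: gauss_mgf)
  also have "\<dots> = ennreal (exp (\<Sum>p\<in>I. (c p)\<^sup>2/2))"
    by (simp add: exp_sum[OF assms] prod_ennreal)
  finally show ?thesis .
qed

definition ch :: "real \<Rightarrow> real" where "ch b = (exp b + exp (- b)) / 2"

lemma ch_ge_1: "1 \<le> ch b"
proof -
  have "2 \<le> exp b + exp (-b)" using exp_ge_add_one_self[of b] exp_ge_add_one_self[of "-b"] by linarith
  then show ?thesis by (simp add: ch_def)
qed

lemma ch_pos: "0 < ch b" using ch_ge_1[of b] by simp

lemma ch_relu: "ch (c * max s 0) \<le> ch (c * s)"
proof (cases "s \<ge> 0")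
  case True then show ?thesis by (simp add: max_def)
next
  case False then have "max s 0 = 0" by simp
  then show ?thesis using ch_ge_1[of "c * s"] by (simp add: ch_def)
qed

abbreviation rad :: "real measure" where "rad \<equiv> measure_pmf (pmf_of_set {-1, 1::real})"

lemma rad_mgf: "(\<integral>\<^sup>+t. ennreal (exp (t*b)) \<partial>rad) = ennreal (ch b)"
proof -
  have "(\<integral>\<^sup>+t. ennreal (exp (t*b)) \<partial>rad) = (\<Sum>t\<in>{-1,1::real}. ennreal (exp (t*b))) / of_nat (card {-1,1::real})"
    by (rule nn_integral_pmf_of_set) auto
  also have "\<dots> = (ennreal (exp (-b)) + ennreal (exp b)) / 2"
    by simp
  also have "\<dots> = ennreal (exp b + exp (-b)) / ennreal 2"
  proof -
    have "ennreal (exp b + exp (-b)) = ennreal (exp b) + ennreal (exp (-b))"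
      by (rule ennreal_plus) auto
    then show ?thesis by (simp add: ac_simps)
  qed
  also have "\<dots> = ennreal (ch b)"
    unfolding ch_def by (rule divide_ennreal) auto
  finally show ?thesis .
qed

lemma rad_prod_mgf:
  assumes "finite I"
  shows "(\<integral>\<^sup>+a. ennreal (exp (\<Sum>j\<in>I. a j * b j)) \<partial>PiM I (\<lambda>_. rad)) = ennreal (\<Prod>j\<in>I. ch (b j))"
proof -
  interpret product_prob_space "\<lambda>_. rad" I
    by (intro product_prob_spaceI prob_space_measure_pmf)
  have "(\<integral>\<^sup>+a. ennreal (exp (\<Sum>j\<in>I. a j * b j)) \<partial>PiM I (\<lambda>_. rad))
      = (\<integral>\<^sup>+a. (\<Prod>j\<in>I. (\<lambda>j t. ennreal (exp (t * b j))) j (a j)) \<partial>PiM I (\<lambda>_. rad))"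
    by (intro nn_integral_cong) (simp add: exp_sum[OF assms] prod_ennreal)
  also have "\<dots> = (\<Prod>j\<in>I. \<integral>\<^sup>+t. ennreal (exp (t * b j)) \<partial>rad)"
    by (rule product_nn_integral_prod[OF assms]) simp
  also have "\<dots> = (\<Prod>j\<in>I. ennreal (ch (b j)))"
    by (simp add: rad_mgf)
  also have "\<dots> = ennreal (\<Prod>j\<in>I. ch (b j))"
    by (simp add: prod_ennreal less_imp_le[OF ch_pos])
  finally show ?thesis .
qed

definition Sfun :: "nat \<Rightarrow> nat \<Rightarrow> (nat \<Rightarrow> real) \<Rightarrow> (nat \<Rightarrow> real) \<Rightarrow> (nat \<times> nat \<Rightarrow> real) \<Rightarrow> real" where
  "Sfun m d x a W = (\<Sum>j<m. a j * max (\<Sum>i<d. W (j,i) * x i) 0)"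

lemma prob_rad_vec: "prob_space (rademacher_vec m)"
  unfolding rademacher_vec_def by (intro prob_space_PiM prob_space_measure_pmf)

lemma prob_gauss_mat: "prob_space (gauss_mat m d)"
  unfolding gauss_mat_def by (intro prob_space_PiM prob_std_normal)

lemma prob_init: "prob_space (init_measure m d)"
  unfolding init_measure_def
  by (intro prob_space_pair prob_rad_vec prob_gauss_mat)

lemma AE_rad: "AE a in rademacher_vec m. \<forall>j\<in>{..<m}. a j \<in> {-1,1}"
proof -
  have "\<forall>j\<in>{..<m}. AE a in rademacher_vec m. a j \<in> {-1,1}"
  proof
    fix j assume j: "j \<in> {..<m}"
    have "AE t in rad. t \<in> {-1,1}" by (simp add: AE_measure_pmf_iff)
    then show "AE a in rademacher_vec m. a j \<in> {-1,1}"
      unfolding rademacher_vec_def by (intro AE_PiM_component[OF _ j]) (auto intro: prob_space_measure_pmf)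
  qed
  then show ?thesis by (subst AE_ball_countable) auto
qed

lemma meas_rad_comp: "j < m \<Longrightarrow> (\<lambda>a. a j) \<in> borel_measurable (rademacher_vec m)"
  unfolding rademacher_vec_def
  by (rule measurable_compose[OF measurable_component_singleton[of j "{..<m}" "\<lambda>_. rad"]]) auto

lemma meas_gauss_comp: "p \<in> {..<m} \<times> {..<d} \<Longrightarrow> (\<lambda>W. W p) \<in> borel_measurable (gauss_mat m d)"
  unfolding gauss_mat_def
  by (rule measurable_compose[OF measurable_component_singleton[of p]]) auto

lemma meas_a: "j < m \<Longrightarrow> (\<lambda>\<omega>. fst \<omega> j) \<in> borel_measurable (init_measure m d)"
  unfolding init_measure_def
  by (rule measurable_compose[OF measurable_fst meas_rad_comp])

lemma meas_W: "j < m \<Longrightarrow> i < d \<Longrightarrow> (\<lambda>\<omega>. snd \<omega> (j,i)) \<in> borel_measurable (init_measure m d)"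
  unfolding init_measure_def
  by (rule measurable_compose[OF measurable_snd meas_gauss_comp]) auto

lemma meas_rowdot: "j < m \<Longrightarrow> (\<lambda>\<omega>. \<Sum>i<d. snd \<omega> (j,i) * x i) \<in> borel_measurable (init_measure m d)"
  by (intro borel_measurable_sum borel_measurable_times meas_W measurable_const) auto

lemma meas_S:
  "(\<lambda>\<omega>. Sfun m d x (fst \<omega>) (snd \<omega>)) \<in> borel_measurable (init_measure m d)"
  unfolding Sfun_def
  by (intro borel_measurable_sum borel_measurable_times borel_measurable_max meas_rowdot meas_a measurable_const) auto

lemma meas_h: "(\<lambda>\<omega>. \<Sum>j<m. fst \<omega> j * (l * (\<Sum>i<d. snd \<omega> (j,i) * x i))) \<in> borel_measurable (init_measure m d)"
  by (intro borel_measurable_sum borel_measurable_times meas_rowdot meas_a measurable_const) auto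

lemma mgf_S:
  "(\<integral>\<^sup>+\<omega>. ennreal (exp (l * Sfun m d x (fst \<omega>) (snd \<omega>))) \<partial>init_measure m d)
     \<le> ennreal (exp (l\<^sup>2 * real m * (\<Sum>i<d. (x i)\<^sup>2) / 2))"
proof -
  interpret R: prob_space "rademacher_vec m" by (rule prob_rad_vec)
  interpret G: prob_space "gauss_mat m d" by (rule prob_gauss_mat)
  interpret P: pair_sigma_finite "rademacher_vec m" "gauss_mat m d" ..
  define s where "s W j = (\<Sum>i<d. W (j,i) * x i)" for W :: "nat \<times> nat \<Rightarrow> real" and j
  define f where "f \<omega> = ennreal (exp (l * Sfun m d x (fst \<omega>) (snd \<omega>)))" for \<omega> :: "(nat \<Rightarrow> real) \<times> (nat \<times> nat \<Rightarrow> real)"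
  define h where "h \<omega> = ennreal (exp (\<Sum>j<m. fst \<omega> j * (l * s (snd \<omega>) j)))" for \<omega> :: "(nat \<Rightarrow> real) \<times> (nat \<times> nat \<Rightarrow> real)"
  have mf: "f \<in> borel_measurable (rademacher_vec m \<Otimes>\<^sub>M gauss_mat m d)"
    unfolding f_def using meas_S[of m d x, unfolded init_measure_def] by measurable
  have mh: "h \<in> borel_measurable (rademacher_vec m \<Otimes>\<^sub>M gauss_mat m d)"
    unfolding h_def s_def using meas_h[where m=m and d=d and x=x and l=l, unfolded init_measure_def] by measurable
  have "(\<integral>\<^sup>+\<omega>. f \<omega> \<partial>init_measure m d) = (\<integral>\<^sup>+W. \<integral>\<^sup>+a. f (a,W) \<partial>rademacher_vec m \<partial>gauss_mat m d)"
    unfolding init_measure_def using P.nn_integral_snd[OF mf] by simp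
  also have "\<dots> = (\<integral>\<^sup>+W. ennreal (\<Prod>j<m. ch (l * max (s W j) 0)) \<partial>gauss_mat m d)"
  proof (intro nn_integral_cong)
    fix W
    have "f (a, W) = ennreal (exp (\<Sum>j<m. a j * (l * max (s W j) 0)))" for a
      unfolding f_def Sfun_def s_def by (simp add: sum_distrib_left algebra_simps)
    then show "(\<integral>\<^sup>+a. f (a,W) \<partial>rademacher_vec m) = ennreal (\<Prod>j<m. ch (l * max (s W j) 0))"
      unfolding rademacher_vec_def by (simp add: rad_prod_mgf)
  qed
  also have "\<dots> \<le> (\<integral>\<^sup>+W. ennreal (\<Prod>j<m. ch (l * s W j)) \<partial>gauss_mat m d)"
    by (intro nn_integral_mono ennreal_leI prod_mono conjI ch_relu less_imp_le[OF ch_pos])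
  also have "\<dots> = (\<integral>\<^sup>+W. \<integral>\<^sup>+a. h (a,W) \<partial>rademacher_vec m \<partial>gauss_mat m d)"
    unfolding h_def rademacher_vec_def by (simp add: rad_prod_mgf)
  also have "\<dots> = (\<integral>\<^sup>+a. \<integral>\<^sup>+W. h (a,W) \<partial>gauss_mat m d \<partial>rademacher_vec m)"
    by (rule P.Fubini[OF mh])
  also have "\<dots> = (\<integral>\<^sup>+a. ennreal (exp (\<Sum>p\<in>{..<m}\<times>{..<d}. (l * a (fst p) * x (snd p))\<^sup>2/2)) \<partial>rademacher_vec m)"
  proof (intro nn_integral_cong)
    fix a
    have "h (a, W) = ennreal (exp (\<Sum>p\<in>{..<m}\<times>{..<d}. (l * a (fst p) * x (snd p)) * W p))" for W
      unfolding h_def s_def by (simp add: sum_distrib_left sum.cartesian_product algebra_simps split_def)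
    then show "(\<integral>\<^sup>+W. h (a,W) \<partial>gauss_mat m d) = ennreal (exp (\<Sum>p\<in>{..<m}\<times>{..<d}. (l * a (fst p) * x (snd p))\<^sup>2/2))"
      unfolding gauss_mat_def by (simp add: gauss_prod_mgf)
  qed
  also have "\<dots> = (\<integral>\<^sup>+a. ennreal (exp (l\<^sup>2 * real m * (\<Sum>i<d. (x i)\<^sup>2) / 2)) \<partial>rademacher_vec m)"
  proof (intro nn_integral_cong_AE, rule AE_mp[OF AE_rad], intro AE_I2 impI)
    fix a :: "nat \<Rightarrow> real" assume a: "\<forall>j\<in>{..<m}. a j \<in> {-1,1}"
    have "(\<Sum>p\<in>{..<m}\<times>{..<d}. (l * a (fst p) * x (snd p))\<^sup>2/2) = (\<Sum>j<m. \<Sum>i<d. (l * a j * x i)\<^sup>2/2)"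
      by (simp add: sum.cartesian_product split_def)
    also have "\<dots> = (\<Sum>j<m. \<Sum>i<d. l\<^sup>2 * (x i)\<^sup>2/2)"
    proof (intro sum.cong refl)
      fix j i assume "j \<in> {..<m}"
      then have "a j = -1 \<or> a j = 1" using a by auto
      then have "(a j)\<^sup>2 = 1" by auto
      then show "(l * a j * x i)\<^sup>2/2 = l\<^sup>2 * (x i)\<^sup>2/2" by (simp add: power_mult_distrib)
    qed
    also have "\<dots> = l\<^sup>2 * real m * (\<Sum>i<d. (x i)\<^sup>2) / 2"
      by (simp add: sum_distrib_left sum_divide_distrib[symmetric] mult_ac)
    finally show "ennreal (exp (\<Sum>p\<in>{..<m}\<times>{..<d}. (l * a (fst p) * x (snd p))\<^sup>2/2)) = ennreal (exp (l\<^sup>2 * real m * (\<Sum>i<d. (x i)\<^sup>2) / 2))"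
      by simp
  qed
  also have "\<dots> = ennreal (exp (l\<^sup>2 * real m * (\<Sum>i<d. (x i)\<^sup>2) / 2))"
    by (simp add: R.emeasure_space_1)
  finally show ?thesis unfolding f_def .
qed

lemma fro_L2: "fro_norm m d V = L2_set V ({..<m} \<times> {..<d})"
  unfolding fro_norm_def L2_set_def by (simp add: sum.cartesian_product split_def)

lemma fi_sum: "frob_inner m d A B = (\<Sum>p\<in>{..<m} \<times> {..<d}. A p * B p)"
  unfolding frob_inner_def by (simp add: sum.cartesian_product split_def)

lemma fro_nonneg: "0 \<le> fro_norm m d V"
  unfolding fro_norm_def by (intro real_sqrt_ge_zero sum_nonneg) auto

lemma fi_CS: "\<bar>frob_inner m d A B\<bar> \<le> fro_norm m d A * fro_norm m d B"
proof -
  have "\<bar>frob_inner m d A B\<bar> \<le> (\<Sum>p\<in>{..<m} \<times> {..<d}. \<bar>A p\<bar> * \<bar>B p\<bar>)"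
    unfolding fi_sum by (rule order_trans[OF sum_abs]) (simp add: abs_mult)
  also have "\<dots> \<le> fro_norm m d A * fro_norm m d B"
    unfolding fro_L2 by (rule L2_set_mult_ineq)
  finally show ?thesis .
qed

lemma fi_add: "frob_inner m d A (\<lambda>p. B p + C p) = frob_inner m d A B + frob_inner m d A C"
  unfolding fi_sum by (simp add: distrib_left sum.distrib)

lemma fi_diff: "frob_inner m d A (\<lambda>p. B p - C p) = frob_inner m d A B - frob_inner m d A C"
  unfolding fi_sum by (simp add: right_diff_distrib sum_subtractf)

lemma fi_scale: "frob_inner m d A (\<lambda>p. t * B p) = t * frob_inner m d A B"
  unfolding fi_sum by (simp add: sum_distrib_left mult_ac)

lemma fi_self: "frob_inner m d A A = (fro_norm m d A)\<^sup>2"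
  unfolding fi_sum fro_L2 L2_set_def by (simp add: power2_eq_square sum_nonneg)

lemma fro_scale: "fro_norm m d (\<lambda>p. t * A p) = \<bar>t\<bar> * fro_norm m d A"
  unfolding fro_norm_def by (simp add: power_mult_distrib sum_distrib_left[symmetric] real_sqrt_mult)

definition actsum :: "nat \<Rightarrow> nat \<Rightarrow> (nat \<Rightarrow> real) \<Rightarrow> (nat \<Rightarrow> real) \<Rightarrow> (nat \<times> nat \<Rightarrow> real) \<Rightarrow> real" where
  "actsum m d x a W = (\<Sum>j<m. (a j)\<^sup>2 * (if (\<Sum>i<d. W (j, i) * x i) \<ge> 0 then 1 else 0))"

lemma actsum_nonneg: "0 \<le> actsum m d x a W"
  unfolding actsum_def by (intro sum_nonneg) auto

lemma grad_W: "frob_inner m d (grad_f \<rho> m d a W x) W = \<rho> / sqrt (real m) * Sfun m d x a W"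
proof -
  define ind where "ind j = (if (\<Sum>i<d. W (j, i) * x i) \<ge> 0 then 1 else (0::real))" for j
  have "frob_inner m d (grad_f \<rho> m d a W x) W
      = (\<Sum>j<m. \<Sum>k<d. (\<rho> / sqrt (real m) * a j * ind j) * (W (j,k) * x k))"
    unfolding frob_inner_def grad_f_def ind_def by (intro sum.cong refl) (simp add: mult_ac)
  also have "\<dots> = (\<Sum>j<m. (\<rho> / sqrt (real m) * a j * ind j) * (\<Sum>k<d. W (j,k) * x k))"
    by (simp add: sum_distrib_left)
  also have "\<dots> = (\<Sum>j<m. \<rho> / sqrt (real m) * (a j * max (\<Sum>i<d. W (j,i) * x i) 0))"
    by (intro sum.cong refl) (auto simp: max_def ind_def mult_ac)
  also have "\<dots> = \<rho> / sqrt (real m) * Sfun m d x a W"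
    unfolding Sfun_def by (simp add: sum_distrib_left)
  finally show ?thesis .
qed

lemma grad_norm:
  assumes "0 \<le> \<rho>"
  shows "fro_norm m d (grad_f \<rho> m d a W x) = \<rho> / sqrt (real m) * vec_norm d x * sqrt (actsum m d x a W)"
proof -
  have "(\<Sum>j<m. \<Sum>k<d. (grad_f \<rho> m d a W x (j, k))\<^sup>2)
      = (\<Sum>j<m. (\<rho> / sqrt (real m))\<^sup>2 * (\<Sum>k<d. (x k)\<^sup>2) * ((a j)\<^sup>2 * (if (\<Sum>i<d. W (j, i) * x i) \<ge> 0 then 1 else 0)))"
  proof (intro sum.cong refl)
    fix j
    define ind where "ind = (if (\<Sum>i<d. W (j, i) * x i) \<ge> 0 then 1 else (0::real))"
    have "(grad_f \<rho> m d a W x (j, k))\<^sup>2 = ((\<rho> / sqrt (real m))\<^sup>2 * ((a j)\<^sup>2 * ind)) * (x k)\<^sup>2" for k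
      unfolding grad_f_def ind_def by (auto simp: power_mult_distrib power_divide)
    then have "(\<Sum>k<d. (grad_f \<rho> m d a W x (j, k))\<^sup>2) = ((\<rho> / sqrt (real m))\<^sup>2 * ((a j)\<^sup>2 * ind)) * (\<Sum>k<d. (x k)\<^sup>2)"
      by (simp add: sum_distrib_left)
    then show "(\<Sum>k<d. (grad_f \<rho> m d a W x (j, k))\<^sup>2) = (\<rho> / sqrt (real m))\<^sup>2 * (\<Sum>k<d. (x k)\<^sup>2) * ((a j)\<^sup>2 * (if (\<Sum>i<d. W (j, i) * x i) \<ge> 0 then 1 else 0))"
      unfolding ind_def by (simp add: mult_ac)
  qed
  also have "\<dots> = (\<rho> / sqrt (real m))\<^sup>2 * (\<Sum>k<d. (x k)\<^sup>2) * actsum m d x a W"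
    unfolding actsum_def by (simp add: sum_distrib_left)
  finally have "(\<Sum>j<m. \<Sum>k<d. (grad_f \<rho> m d a W x (j, k))\<^sup>2) = (\<rho> / sqrt (real m))\<^sup>2 * (\<Sum>k<d. (x k)\<^sup>2) * actsum m d x a W" .
  then show ?thesis
    unfolding fro_norm_def vec_norm_def using assms by (simp add: real_sqrt_mult)
qed

lemma actsum_le:
  assumes "\<forall>j<m. \<bar>a j\<bar> \<le> 1"
  shows "actsum m d x a W \<le> real m"
proof -
  have "actsum m d x a W \<le> (\<Sum>j<m. 1)"
    unfolding actsum_def
  proof (intro sum_mono)
    fix j assume "j \<in> {..<m}"
    then have "\<bar>a j\<bar> \<le> 1" using assms by auto
    then have "\<bar>a j\<bar>\<^sup>2 \<le> 1" by (intro power_le_one) auto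
    then have "(a j)\<^sup>2 \<le> 1" by simp
    then show "(a j)\<^sup>2 * (if (\<Sum>i<d. W (j, i) * x i) \<ge> 0 then 1 else 0) \<le> 1" by auto
  qed
  then show ?thesis by simp
qed

lemma grad_norm_le:
  assumes "0 \<le> \<rho>" "0 < m" "\<forall>j<m. \<bar>a j\<bar> \<le> 1"
  shows "fro_norm m d (grad_f \<rho> m d a W x) \<le> \<rho> * vec_norm d x"
proof -
  have "sqrt (actsum m d x a W) \<le> sqrt (real m)"
    using actsum_le[OF assms(3)] by simp
  moreover have "0 \<le> \<rho> / sqrt (real m) * vec_norm d x"
    using assms by (intro mult_nonneg_nonneg divide_nonneg_nonneg) (auto simp: vec_norm_def sum_nonneg)
  ultimately have "\<rho> / sqrt (real m) * vec_norm d x * sqrt (actsum m d x a W) \<le> \<rho> / sqrt (real m) * vec_norm d x * sqrt (real m)"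
    by (rule mult_left_mono)
  also have "\<dots> = \<rho> * vec_norm d x" using assms by simp
  finally show ?thesis using grad_norm[OF assms(1)] by simp
qed

lemma pred_borel:
  assumes f: "f \<in> borel_measurable M" and B: "B \<in> sets borel"
  shows "{\<omega>\<in>space M. f \<omega> \<in> B} \<in> sets M"
proof -
  have "{\<omega>\<in>space M. f \<omega> \<in> B} = f -` B \<inter> space M" by auto
  then show ?thesis using measurable_sets[OF f B] by simp
qed

lemma AE_init: "AE \<omega> in init_measure m d. \<forall>j\<in>{..<m}. fst \<omega> j \<in> {-1,1}"
proof -
  interpret R: prob_space "rademacher_vec m" by (rule prob_rad_vec)
  interpret G: prob_space "gauss_mat m d" by (rule prob_gauss_mat)
  interpret P: pair_sigma_finite "rademacher_vec m" "gauss_mat m d" ..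
  have ms: "{\<omega>\<in>space (init_measure m d). \<forall>j\<in>{..<m}. fst \<omega> j \<in> {-1,1}} \<in> sets (init_measure m d)"
    by (intro sets.sets_Collect_finite_All pred_borel meas_a) (auto intro: borel_closed finite_imp_closed)
  show ?thesis
    unfolding init_measure_def
  proof (rule P.AE_pair_measure)
    show "{x \<in> space (rademacher_vec m \<Otimes>\<^sub>M gauss_mat m d). \<forall>j\<in>{..<m}. fst x j \<in> {- 1, 1}} \<in> sets (rademacher_vec m \<Otimes>\<^sub>M gauss_mat m d)"
      using ms unfolding init_measure_def .
    show "AE x in rademacher_vec m. AE y in gauss_mat m d. \<forall>j\<in>{..<m}. fst (x, y) j \<in> {- 1, 1}"
      using AE_rad[of m] by (rule AE_mp) (auto intro!: AE_I2)
  qed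
qed

lemma sets_ge:
  fixes f :: "'a \<Rightarrow> real"
  assumes f: "f \<in> borel_measurable M"
  shows "{\<omega>\<in>space M. u \<le> f \<omega>} \<in> sets M"
proof -
  have "{\<omega>\<in>space M. u \<le> f \<omega>} = {\<omega>\<in>space M. f \<omega> \<in> {u..}}" by auto
  also have "\<dots> \<in> sets M" by (rule pred_borel[OF f]) (rule borel_closed, rule closed_atLeast)
  finally show ?thesis .
qed

lemma sum_single:
  assumes "finite I" "p \<in> I"
  shows "(\<Sum>q\<in>I. (if q = p then l else 0) * W q) = l * (W p :: real)"
    and "(\<Sum>q\<in>I. (if q = p then l else 0)\<^sup>2 / 2) = l\<^sup>2 / (2::real)"
proof -
  have "(\<Sum>q\<in>I. (if q = p then l else 0) * W q) = (\<Sum>q\<in>I. if q = p then l * W p else 0)"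
    by (intro sum.cong) auto
  then show "(\<Sum>q\<in>I. (if q = p then l else 0) * W q) = l * (W p :: real)" using assms by simp
  have "(\<Sum>q\<in>I. (if q = p then l else 0)\<^sup>2 / 2) = (\<Sum>q\<in>I. if q = p then l\<^sup>2 / 2 else 0)"
    by (intro sum.cong) auto
  then show "(\<Sum>q\<in>I. (if q = p then l else 0)\<^sup>2 / 2) = l\<^sup>2 / (2::real)" using assms by simp
qed

lemma markov_exp:
  assumes f: "f \<in> borel_measurable M" and l: "0 \<le> l"
  shows "emeasure M {\<omega>\<in>space M. u \<le> f \<omega>} \<le> ennreal (exp (- l * u)) * (\<integral>\<^sup>+\<omega>. ennreal (exp (l * f \<omega>)) \<partial>M)"
proof -
  have A: "{\<omega>\<in>space M. u \<le> f \<omega>} \<in> sets M" using f by (rule sets_ge)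
  have "emeasure M {\<omega>\<in>space M. u \<le> f \<omega>} = (\<integral>\<^sup>+\<omega>. indicator {\<omega>\<in>space M. u \<le> f \<omega>} \<omega> \<partial>M)"
    using A by simp
  also have "\<dots> \<le> (\<integral>\<^sup>+\<omega>. ennreal (exp (- l * u)) * ennreal (exp (l * f \<omega>)) \<partial>M)"
  proof (intro nn_integral_mono)
    fix \<omega> assume "\<omega> \<in> space M"
    show "indicator {\<omega>\<in>space M. u \<le> f \<omega>} \<omega> \<le> ennreal (exp (- l * u)) * ennreal (exp (l * f \<omega>))"
    proof (cases "u \<le> f \<omega>")
      case True
      then have "0 \<le> l * f \<omega> + - l * u" using l by (simp add: algebra_simps mult_left_mono)
      then have "1 \<le> exp (- l * u) * exp (l * f \<omega>)" by (simp add: mult_exp_exp add.commute)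
      then have "ennreal 1 \<le> ennreal (exp (- l * u) * exp (l * f \<omega>))" by (rule ennreal_leI)
      then show ?thesis by (simp add: indicator_def ennreal_mult'[symmetric])
    qed (simp add: indicator_def)
  qed
  also have "\<dots> = ennreal (exp (- l * u)) * (\<integral>\<^sup>+\<omega>. ennreal (exp (l * f \<omega>)) \<partial>M)"
    by (rule nn_integral_cmult) (use f in measurable)
  finally show ?thesis .
qed

lemma emeasure_to_measure:
  assumes "emeasure M A \<le> ennreal b" "0 \<le> b"
  shows "measure M A \<le> b"
proof -
  have "measure M A = enn2real (emeasure M A)" by (simp add: measure_def)
  also have "\<dots> \<le> enn2real (ennreal b)" by (rule enn2real_mono[OF assms(1)]) simp
  finally show ?thesis using assms(2) by simp
qed

lemma exp_bound_ennreal: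
  assumes "E \<le> ennreal (exp (- l * u)) * F" "F \<le> ennreal (exp v)"
  shows "E \<le> ennreal (exp (v - l * u))"
proof -
  have "E \<le> ennreal (exp (- l * u)) * ennreal (exp v)"
    using assms by (meson order_trans mult_left_mono zero_le)
  also have "\<dots> = ennreal (exp (v - l * u))"
    by (simp add: ennreal_mult'[symmetric] mult_exp_exp)
  finally show ?thesis .
qed

lemma two_sided:
  fixes f :: "'a \<Rightarrow> real"
  assumes "prob_space M" and f: "f \<in> borel_measurable M"
    and A1: "emeasure M {\<omega>\<in>space M. u \<le> f \<omega>} \<le> ennreal b"
    and A2: "emeasure M {\<omega>\<in>space M. u \<le> - f \<omega>} \<le> ennreal b"
    and b: "0 \<le> b"
  shows "measure M {\<omega>\<in>space M. u < \<bar>f \<omega>\<bar>} \<le> 2 * b"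
proof -
  interpret prob_space M by fact
  have s1: "{\<omega>\<in>space M. u \<le> f \<omega>} \<in> sets M" using f by (rule sets_ge)
  have s2: "{\<omega>\<in>space M. u \<le> - f \<omega>} \<in> sets M" using borel_measurable_uminus[OF f] by (rule sets_ge)
  have "measure M {\<omega>\<in>space M. u < \<bar>f \<omega>\<bar>} \<le> measure M ({\<omega>\<in>space M. u \<le> f \<omega>} \<union> {\<omega>\<in>space M. u \<le> - f \<omega>})"
    by (intro finite_measure_mono sets.Un s1 s2) auto
  also have "\<dots> \<le> measure M {\<omega>\<in>space M. u \<le> f \<omega>} + measure M {\<omega>\<in>space M. u \<le> - f \<omega>}"
    by (intro measure_Un_le s1 s2)
  also have "\<dots> \<le> b + b"
    by (intro add_mono emeasure_to_measure A1 A2 b)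
  finally show ?thesis by simp
qed

lemma tail_S:
  assumes m: "0 < m"
  shows "measure (init_measure m d) {\<omega>\<in>space (init_measure m d). c * sqrt (real m) * vec_norm d x < \<bar>Sfun m d x (fst \<omega>) (snd \<omega>)\<bar>} \<le> 2 * exp (1/2 - c)"
proof -
  define r where "r = vec_norm d x"
  have sq: "r\<^sup>2 = (\<Sum>i<d. (x i)\<^sup>2)" unfolding r_def vec_norm_def by (simp add: sum_nonneg)
  have r0: "0 \<le> r" unfolding r_def vec_norm_def by (simp add: sum_nonneg)
  show ?thesis
  proof (cases "r = 0")
    case True
    then have "(\<Sum>i<d. (x i)\<^sup>2) = 0" using sq by simp
    then have "\<forall>i<d. x i = 0" using sum_nonneg_eq_0_iff[of "{..<d}" "\<lambda>i. (x i)\<^sup>2"] by simp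
    then have "\<forall>a W. Sfun m d x a W = 0" unfolding Sfun_def by simp
    then have e: "{\<omega>\<in>space (init_measure m d). c * sqrt (real m) * vec_norm d x < \<bar>Sfun m d x (fst \<omega>) (snd \<omega>)\<bar>} = {}"
      using True r_def by auto
    show ?thesis unfolding e by simp
  next
    case False
    then have r: "0 < r" using r0 by simp
    define l where "l = 1 / (sqrt (real m) * r)"
    define u where "u = c * sqrt (real m) * r"
    have l0: "0 \<le> l" unfolding l_def using r by simp
    have lu: "l * u = c" unfolding l_def u_def using r m by (simp add: field_simps)
    have lm: "l\<^sup>2 * real m * (\<Sum>i<d. (x i)\<^sup>2) / 2 = 1/2"
      unfolding sq[symmetric] l_def using r m by (simp add: field_simps power2_eq_square)
    have lm': "(- l)\<^sup>2 * real m * (\<Sum>i<d. (x i)\<^sup>2) / 2 = 1/2" using lm by simp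
    have A1: "emeasure (init_measure m d) {\<omega>\<in>space (init_measure m d). u \<le> Sfun m d x (fst \<omega>) (snd \<omega>)} \<le> ennreal (exp (1/2 - c))"
      using exp_bound_ennreal[OF markov_exp[OF meas_S l0, where u=u] mgf_S[where l=l and m=m and d=d and x=x, unfolded lm]] lu by simp
    have A2: "emeasure (init_measure m d) {\<omega>\<in>space (init_measure m d). u \<le> - Sfun m d x (fst \<omega>) (snd \<omega>)} \<le> ennreal (exp (1/2 - c))"
    proof -
      have mS: "(\<lambda>\<omega>. - Sfun m d x (fst \<omega>) (snd \<omega>)) \<in> borel_measurable (init_measure m d)"
        using meas_S by measurable
      have "(\<integral>\<^sup>+\<omega>. ennreal (exp (l * - Sfun m d x (fst \<omega>) (snd \<omega>))) \<partial>init_measure m d) \<le> ennreal (exp (1/2))"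
        using mgf_S[where l="-l" and m=m and d=d and x=x, unfolded lm'] by simp
      then show ?thesis
        using exp_bound_ennreal[OF markov_exp[OF mS l0, where u=u]] lu by simp
    qed
    show ?thesis
      using two_sided[OF prob_init meas_S A1 A2] unfolding u_def r_def by simp
  qed
qed

lemma mgf_entry:
  assumes p: "p \<in> {..<m} \<times> {..<d}"
  shows "(\<integral>\<^sup>+\<omega>. ennreal (exp (l * snd \<omega> p)) \<partial>init_measure m d) = ennreal (exp (l\<^sup>2 / 2))"
proof -
  interpret R: prob_space "rademacher_vec m" by (rule prob_rad_vec)
  interpret G: prob_space "gauss_mat m d" by (rule prob_gauss_mat)
  interpret P: pair_sigma_finite "rademacher_vec m" "gauss_mat m d" ..
  have mw: "(\<lambda>\<omega>. snd \<omega> p) \<in> borel_measurable (rademacher_vec m \<Otimes>\<^sub>M gauss_mat m d)"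
    using meas_W[of "fst p" m "snd p" d] p unfolding init_measure_def by auto
  have mf: "(\<lambda>\<omega>. ennreal (exp (l * snd \<omega> p))) \<in> borel_measurable (rademacher_vec m \<Otimes>\<^sub>M gauss_mat m d)"
    using mw by measurable
  have "(\<integral>\<^sup>+\<omega>. ennreal (exp (l * snd \<omega> p)) \<partial>init_measure m d)
      = (\<integral>\<^sup>+W. \<integral>\<^sup>+a. ennreal (exp (l * W p)) \<partial>rademacher_vec m \<partial>gauss_mat m d)"
    unfolding init_measure_def using P.nn_integral_snd[OF mf] by simp
  also have "\<dots> = (\<integral>\<^sup>+W. ennreal (exp (\<Sum>q\<in>{..<m} \<times> {..<d}. (if q = p then l else 0) * W q)) \<partial>gauss_mat m d)"
    using p by (intro nn_integral_cong) (simp add: R.emeasure_space_1 sum_single)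
  also have "\<dots> = ennreal (exp (\<Sum>q\<in>{..<m} \<times> {..<d}. (if q = p then l else 0)\<^sup>2 / 2))"
    unfolding gauss_mat_def by (rule gauss_prod_mgf) simp
  also have "\<dots> = ennreal (exp (l\<^sup>2 / 2))"
    using p by (simp add: sum_single)
  finally show ?thesis .
qed

lemma tail_entry:
  assumes p: "p \<in> {..<m} \<times> {..<d}"
  shows "measure (init_measure m d) {\<omega>\<in>space (init_measure m d). t < \<bar>snd \<omega> p\<bar>} \<le> 2 * exp (1/2 - t)"
proof -
  have mw: "(\<lambda>\<omega>. snd \<omega> p) \<in> borel_measurable (init_measure m d)"
    using meas_W[of "fst p" m "snd p" d] p by auto
  have mw': "(\<lambda>\<omega>. - snd \<omega> p) \<in> borel_measurable (init_measure m d)"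
    using mw by measurable
  have l0: "(0::real) \<le> 1" by simp
  have A1: "emeasure (init_measure m d) {\<omega>\<in>space (init_measure m d). t \<le> snd \<omega> p} \<le> ennreal (exp (1/2 - t))"
    using exp_bound_ennreal[OF markov_exp[OF mw l0, of t] eq_refl[OF mgf_entry[OF p, of 1]]] by simp
  have "(\<integral>\<^sup>+\<omega>. ennreal (exp (1 * - snd \<omega> p)) \<partial>init_measure m d) \<le> ennreal (exp (1/2))"
    using mgf_entry[OF p, of "-1"] by simp
  then have A2: "emeasure (init_measure m d) {\<omega>\<in>space (init_measure m d). t \<le> - snd \<omega> p} \<le> ennreal (exp (1/2 - t))"
    using exp_bound_ennreal[OF markov_exp[OF mw' l0, of t]] by simp
  show ?thesis using two_sided[OF prob_init mw A1 A2] by simp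
qed

lemma sets_le:
  fixes f :: "'a \<Rightarrow> real"
  assumes f: "f \<in> borel_measurable M"
  shows "{\<omega>\<in>space M. f \<omega> \<le> u} \<in> sets M"
proof -
  have "{\<omega>\<in>space M. f \<omega> \<le> u} = {\<omega>\<in>space M. f \<omega> \<in> {..u}}" by auto
  also have "\<dots> \<in> sets M" by (rule pred_borel[OF f]) (rule borel_closed, rule closed_atMost)
  finally show ?thesis .
qed

lemma sets_ge':
  fixes f :: "'a \<Rightarrow> real"
  assumes f: "f \<in> borel_measurable M"
  shows "{\<omega>\<in>space M. u < f \<omega>} \<in> sets M"
proof -
  have "{\<omega>\<in>space M. u < f \<omega>} = {\<omega>\<in>space M. f \<omega> \<in> {u<..}}" by auto
  also have "\<dots> \<in> sets M" by (rule pred_borel[OF f]) (rule borel_open, rule open_greaterThan)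
  finally show ?thesis .
qed

lemma meas_actsum: "(\<lambda>\<omega>. actsum m d x (fst \<omega>) (snd \<omega>)) \<in> borel_measurable (init_measure m d)"
  unfolding actsum_def
proof (rule borel_measurable_sum)
  fix j assume j: "j \<in> {..<m}"
  have s: "{\<omega>\<in>space (init_measure m d). 0 \<le> (\<Sum>i<d. snd \<omega> (j, i) * x i)} \<in> sets (init_measure m d)"
    using j by (intro sets_ge meas_rowdot) simp
  have i: "(\<lambda>\<omega>. if 0 \<le> (\<Sum>i<d. snd \<omega> (j, i) * x i) then (1::real) else 0) \<in> borel_measurable (init_measure m d)"
    using s by (intro measurable_If) auto
  have a: "(\<lambda>\<omega>. fst \<omega> j) \<in> borel_measurable (init_measure m d)" using j by (intro meas_a) simp
  show "(\<lambda>\<omega>. (fst \<omega> j)\<^sup>2 * (if 0 \<le> (\<Sum>i<d. snd \<omega> (j, i) * x i) then 1 else 0)) \<in> borel_measurable (init_measure m d)"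
    using i a by (intro borel_measurable_times borel_measurable_power)
qed

lemma char1:
  assumes P: "0 \<le> P" and c: "0 \<le> c"
  shows "(\<forall>V. \<bar>frob_inner m d g V\<bar> \<le> P * (fro_norm m d (\<lambda>jk. V jk - W jk) + c))
     \<longleftrightarrow> (fro_norm m d g \<le> P \<and> \<bar>frob_inner m d g W\<bar> \<le> P * c)"
proof
  assume H: "\<forall>V. \<bar>frob_inner m d g V\<bar> \<le> P * (fro_norm m d (\<lambda>jk. V jk - W jk) + c)"
  have z: "fro_norm m d (\<lambda>jk. W jk - W jk) = 0" unfolding fro_norm_def by simp
  have 2: "\<bar>frob_inner m d g W\<bar> \<le> P * c" using H[rule_format, of W] z by simp
  moreover have "fro_norm m d g \<le> P"
  proof (rule ccontr)
    assume "\<not> fro_norm m d g \<le> P"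
    then have NP: "P < fro_norm m d g" by simp
    define N where "N = fro_norm m d g"
    have N0: "0 < N" using NP P N_def by simp
    define t where "t = (\<bar>frob_inner m d g W\<bar> + P * c + 1) / (N * (N - P))"
    have "0 \<le> P * c" using P c by simp
    then have "0 < \<bar>frob_inner m d g W\<bar> + P * c + 1" by simp
    then have t0: "0 < t" unfolding t_def using N0 NP P c N_def by (intro divide_pos_pos mult_pos_pos) auto
    have tN: "t * N * (N - P) = \<bar>frob_inner m d g W\<bar> + P * c + 1"
      unfolding t_def using N0 NP N_def by (simp add: field_simps)
    define V where "V = (\<lambda>p. W p + t * g p)"
    have d: "(\<lambda>jk. V jk - W jk) = (\<lambda>p. t * g p)" unfolding V_def by auto
    have fV: "frob_inner m d g V = frob_inner m d g W + t * N\<^sup>2"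
      unfolding V_def N_def by (simp add: fi_add fi_scale fi_self)
    have "\<bar>frob_inner m d g V\<bar> \<le> P * (t * N + c)"
      using H[rule_format, of V] unfolding d fro_scale N_def using t0 by simp
    then have "frob_inner m d g W + t * N\<^sup>2 \<le> P * (t * N + c)" unfolding fV by simp
    then have "t * N * (N - P) \<le> - frob_inner m d g W + P * c"
      by (simp add: algebra_simps power2_eq_square)
    then show False using tN by simp
  qed
  ultimately show "fro_norm m d g \<le> P \<and> \<bar>frob_inner m d g W\<bar> \<le> P * c" by simp
next
  assume H: "fro_norm m d g \<le> P \<and> \<bar>frob_inner m d g W\<bar> \<le> P * c"
  show "\<forall>V. \<bar>frob_inner m d g V\<bar> \<le> P * (fro_norm m d (\<lambda>jk. V jk - W jk) + c)"
  proof
    fix V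
    have "frob_inner m d g V = frob_inner m d g (\<lambda>jk. V jk - W jk) + frob_inner m d g W"
      by (simp add: fi_diff)
    then have "\<bar>frob_inner m d g V\<bar> \<le> \<bar>frob_inner m d g (\<lambda>jk. V jk - W jk)\<bar> + \<bar>frob_inner m d g W\<bar>"
      by simp
    also have "\<dots> \<le> fro_norm m d g * fro_norm m d (\<lambda>jk. V jk - W jk) + P * c"
      using fi_CS H by (intro add_mono) auto
    also have "\<dots> \<le> P * fro_norm m d (\<lambda>jk. V jk - W jk) + P * c"
      using H fro_nonneg c by (intro add_mono mult_right_mono) auto
    finally show "\<bar>frob_inner m d g V\<bar> \<le> P * (fro_norm m d (\<lambda>jk. V jk - W jk) + c)"
      by (simp add: algebra_simps)
  qed
qed

lemma exp_half_le_2: "exp (1/2::real) \<le> 2"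
  using exp_bound_half[of "1/2::real"] by simp

lemma part1:
  assumes m: "0 < m" and rho: "0 < \<rho>" and dl: "0 < \<delta>" "\<delta> < 1"
  shows "measure (init_measure m d)
              {\<omega> \<in> space (init_measure m d).
                 \<forall>V :: nat \<times> nat \<Rightarrow> real.
                   \<bar>frob_inner m d (grad_f \<rho> m d (fst \<omega>) (snd \<omega>) x) V\<bar>
                     \<le> \<rho> * vec_norm d x *
                        (fro_norm m d (\<lambda>jk. V jk - snd \<omega> jk) + 2 * ln (1 / \<delta>))}
              \<ge> 1 - 3 * \<delta>"
proof -
  interpret P: prob_space "init_measure m d" by (rule prob_init)
  define M where "M = init_measure m d"
  define P where "P = \<rho> * vec_norm d x"
  define c where "c = 2 * ln (1 / \<delta>)"
  define E where "E = {\<omega> \<in> space M. \<forall>V :: nat \<times> nat \<Rightarrow> real.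
                   \<bar>frob_inner m d (grad_f \<rho> m d (fst \<omega>) (snd \<omega>) x) V\<bar>
                     \<le> P * (fro_norm m d (\<lambda>jk. V jk - snd \<omega> jk) + c)}"
  have xn: "0 \<le> vec_norm d x" unfolding vec_norm_def by (simp add: sum_nonneg)
  have P0: "0 \<le> P" unfolding P_def using rho xn by simp
  have c0: "0 < c" unfolding c_def using dl by simp
  have E_eq: "E = {\<omega>\<in>space M. \<rho> / sqrt (real m) * vec_norm d x * sqrt (actsum m d x (fst \<omega>) (snd \<omega>)) \<le> P}
               \<inter> {\<omega>\<in>space M. \<bar>\<rho> / sqrt (real m) * Sfun m d x (fst \<omega>) (snd \<omega>)\<bar> \<le> P * c}"
    unfolding E_def using char1[OF P0 less_imp_le[OF c0]] grad_norm[of \<rho>] grad_W rho by auto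
  have E_sets: "E \<in> sets M"
    unfolding E_eq M_def
  proof (intro sets.Int sets_le borel_measurable_times borel_measurable_abs measurable_const meas_S)
    show "(\<lambda>\<omega>. sqrt (actsum m d x (fst \<omega>) (snd \<omega>))) \<in> borel_measurable (init_measure m d)"
      by (rule measurable_compose[OF meas_actsum borel_measurable_sqrt])
  qed (auto simp: space_borel)
  show ?thesis
  proof (cases "\<delta> < 1/3")
    case False
    then have "1 - 3 * \<delta> \<le> 0" by simp
    then show ?thesis by (rule order_trans[OF _ measure_nonneg])
  next
    case True
    define G where "G = {\<omega>\<in>space M. \<bar>Sfun m d x (fst \<omega>) (snd \<omega>)\<bar> \<le> c * sqrt (real m) * vec_norm d x}"
    define B where "B = {\<omega>\<in>space M. c * sqrt (real m) * vec_norm d x < \<bar>Sfun m d x (fst \<omega>) (snd \<omega>)\<bar>}"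
    have B_sets: "B \<in> sets M" unfolding B_def M_def
      by (intro sets_ge' borel_measurable_abs meas_S)
    have GB: "G = space M - B" unfolding G_def B_def by auto
    have "measure M B \<le> 2 * exp (1/2 - c)" unfolding B_def M_def by (rule tail_S[OF m])
    also have "exp (1/2 - c) = exp (1/2) * \<delta>\<^sup>2"
    proof -
      have "- c = ln (\<delta> * \<delta>)" unfolding c_def using dl by (simp add: ln_mult ln_div)
      then have "exp (- c) = \<delta> * \<delta>" using dl by simp
      then have "exp (- c) = \<delta>\<^sup>2" by (simp add: power2_eq_square)
      moreover have "exp (1/2 - c) = exp (1/2) * exp (- c)" by (simp add: mult_exp_exp)
      ultimately show ?thesis by simp
    qed
    also have "2 * (exp (1/2) * \<delta>\<^sup>2) \<le> 2 * (2 * \<delta>\<^sup>2)"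
      using exp_half_le_2 by (intro mult_left_mono mult_right_mono) auto
    also have "\<dots> \<le> 3 * \<delta>" using True dl by (simp add: power2_eq_square)
    finally have mB: "measure M B \<le> 3 * \<delta>" .
    have "measure M G = 1 - measure M B" unfolding GB M_def using B_sets M_def by (simp add: P.prob_compl)
    then have mG: "1 - 3 * \<delta> \<le> measure M G" using mB by simp
    have AE: "AE \<omega> in M. \<omega> \<in> G \<longrightarrow> \<omega> \<in> E"
      unfolding M_def
    proof (rule AE_mp[OF AE_init], intro AE_I2 impI)
      fix \<omega> assume a: "\<forall>j\<in>{..<m}. fst \<omega> j \<in> {- 1, 1}" and g: "\<omega> \<in> G"
      have a1: "\<forall>j<m. \<bar>fst \<omega> j\<bar> \<le> 1"
      proof (intro allI impI)
        fix j assume "j < m"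
        then have "fst \<omega> j = - 1 \<or> fst \<omega> j = 1" using a by auto
        then show "\<bar>fst \<omega> j\<bar> \<le> 1" by auto
      qed
      have "\<rho> / sqrt (real m) * vec_norm d x * sqrt (actsum m d x (fst \<omega>) (snd \<omega>)) \<le> P"
        using grad_norm_le[OF less_imp_le[OF rho] m a1] grad_norm[of \<rho>] rho unfolding P_def by simp
      moreover have "\<bar>\<rho> / sqrt (real m) * Sfun m d x (fst \<omega>) (snd \<omega>)\<bar> \<le> P * c"
      proof -
        have "\<bar>\<rho> / sqrt (real m) * Sfun m d x (fst \<omega>) (snd \<omega>)\<bar> = \<rho> / sqrt (real m) * \<bar>Sfun m d x (fst \<omega>) (snd \<omega>)\<bar>"
          using rho by (simp add: abs_mult)
        also have "\<dots> \<le> \<rho> / sqrt (real m) * (c * sqrt (real m) * vec_norm d x)"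
          using g rho unfolding G_def by (intro mult_left_mono) auto
        also have "\<dots> = P * c" unfolding P_def using m by (simp add: field_simps)
        finally show ?thesis .
      qed
      ultimately show "\<omega> \<in> E" using g unfolding E_eq G_def by auto
    qed
    have "measure M G \<le> measure M E"
      by (rule P.finite_measure_mono_AE[OF AE[unfolded M_def] E_sets[unfolded M_def], folded M_def])
    then show ?thesis using mG unfolding E_def P_def c_def M_def by (simp add: mult.assoc)
  qed
qed

definition tz :: "real \<Rightarrow> int" where
  "tz t = (if 0 \<le> t then \<lfloor>t\<rfloor> else - \<lfloor>- t\<rfloor>)"

lemma tz_both: "\<bar>real_of_int (tz t)\<bar> \<le> \<bar>t\<bar> \<and> \<bar>t - real_of_int (tz t)\<bar> \<le> 1"
proof (cases "0 \<le> t")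
  case True
  have f: "real_of_int \<lfloor>t\<rfloor> \<le> t" "t < real_of_int \<lfloor>t\<rfloor> + 1" using floor_correct[of t] by auto
  have "0 \<le> \<lfloor>t\<rfloor>" using True by simp
  then have "0 \<le> real_of_int \<lfloor>t\<rfloor>" by simp
  moreover have "t - real_of_int \<lfloor>t\<rfloor> \<le> 1" using real_of_int_floor_gt_diff_one[of t] by linarith
  moreover have e: "tz t = \<lfloor>t\<rfloor>" using True by (simp add: tz_def)
  ultimately show ?thesis unfolding e abs_of_nonneg[OF True] abs_le_iff using f True
    by (intro conjI) linarith+
next
  case False
  have f: "real_of_int \<lfloor>-t\<rfloor> \<le> -t" "-t < real_of_int \<lfloor>-t\<rfloor> + 1" using floor_correct[of "-t"] by auto
  have "0 \<le> \<lfloor>-t\<rfloor>" using False by simp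
  then have "0 \<le> real_of_int \<lfloor>-t\<rfloor>" by simp
  moreover have e: "tz t = - \<lfloor>-t\<rfloor>" using False by (simp add: tz_def)
  moreover have h: "\<bar>t\<bar> = -t" using False by simp
  moreover have "-t - real_of_int \<lfloor>-t\<rfloor> \<le> 1" using real_of_int_floor_gt_diff_one[of "-t"] by linarith
  ultimately show ?thesis unfolding e h of_int_minus abs_le_iff using f False
    by (intro conjI) linarith+
qed

lemma tz_abs: "\<bar>real_of_int (tz t)\<bar> \<le> \<bar>t\<bar>" using tz_both by blast
lemma tz_err: "\<bar>t - real_of_int (tz t)\<bar> \<le> 1" using tz_both by blast

definition tr :: "nat \<Rightarrow> nat \<Rightarrow> (nat \<Rightarrow> real) \<Rightarrow> (nat \<Rightarrow> real)" where
  "tr K d x = (\<lambda>i. if i < d then real_of_int (tz (real K * x i)) / real K else 0)"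

lemma tr_abs: "\<bar>tr K d x i\<bar> \<le> \<bar>x i\<bar>"
proof (cases "i < d \<and> K > 0")
  case True
  then have "\<bar>tr K d x i\<bar> = \<bar>real_of_int (tz (real K * x i))\<bar> / real K" unfolding tr_def by (simp add: abs_div)
  also have "\<dots> \<le> \<bar>real K * x i\<bar> / real K" using tz_abs by (intro divide_right_mono) auto
  also have "\<dots> = \<bar>x i\<bar>" using True by (simp add: abs_mult)
  finally show ?thesis .
qed (auto simp: tr_def)

lemma tr_err: "0 < K \<Longrightarrow> i < d \<Longrightarrow> \<bar>x i - tr K d x i\<bar> \<le> 1 / real K"
proof -
  assume K: "0 < K" and i: "i < d"
  have "x i - tr K d x i = (real K * x i - real_of_int (tz (real K * x i))) / real K"
    unfolding tr_def using K i by (simp add: field_simps)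
  then have "\<bar>x i - tr K d x i\<bar> = \<bar>real K * x i - real_of_int (tz (real K * x i))\<bar> / real K"
    using K by (simp add: abs_div)
  also have "\<dots> \<le> 1 / real K" using tz_err K by (intro divide_right_mono) auto
  finally show ?thesis .
qed

lemma vec_norm_mono:
  assumes "\<And>i. i < d \<Longrightarrow> \<bar>y i\<bar> \<le> \<bar>x i\<bar>"
  shows "vec_norm d y \<le> vec_norm d x"
  unfolding vec_norm_def
proof (intro real_sqrt_le_mono sum_mono)
  fix i assume "i \<in> {..<d}"
  then have "\<bar>y i\<bar> \<le> \<bar>x i\<bar>" using assms by simp
  then have "\<bar>y i\<bar>\<^sup>2 \<le> \<bar>x i\<bar>\<^sup>2" by (intro power_mono) auto
  then show "(y i)\<^sup>2 \<le> (x i)\<^sup>2" by simp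
qed

lemma tr_norm: "vec_norm d (tr K d x) \<le> vec_norm d x"
  by (rule vec_norm_mono) (rule tr_abs)

lemma coord_le_norm: "i < d \<Longrightarrow> \<bar>x i\<bar> \<le> vec_norm d x"
proof -
  assume i: "i < d"
  have "(x i)\<^sup>2 \<le> (\<Sum>k<d. (x k)\<^sup>2)"
    using i by (intro member_le_sum) auto
  then have "sqrt ((x i)\<^sup>2) \<le> vec_norm d x" unfolding vec_norm_def by (rule real_sqrt_le_mono)
  then show ?thesis by simp
qed

definition gvals :: "nat \<Rightarrow> real set" where
  "gvals K = (\<lambda>j::int. real_of_int j / real K) ` {- int K..int K}"

definition grid :: "nat \<Rightarrow> nat \<Rightarrow> (nat \<Rightarrow> real) set" where
  "grid K d = (\<lambda>f i. if i < d then f i else 0) ` (PiE {..<d} (\<lambda>_. gvals K))"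

definition Dset :: "nat \<Rightarrow> (nat \<Rightarrow> real) set" where
  "Dset d = (\<Union>K. grid K d)"

lemma finite_grid: "finite (grid K d)"
  unfolding grid_def gvals_def by (intro finite_imageI finite_PiE) auto

lemma card_grid: "card (grid K d) \<le> (2 * K + 1) ^ d"
proof -
  have "card (grid K d) \<le> card (PiE {..<d} (\<lambda>_. gvals K))"
    unfolding grid_def by (intro card_image_le finite_PiE) (auto simp: gvals_def)
  also have "\<dots> = card (gvals K) ^ d" by (simp add: card_PiE)
  also have "card (gvals K) \<le> 2 * K + 1"
  proof -
    have "card (gvals K) \<le> card {- int K..int K}" unfolding gvals_def by (rule card_image_le) simp
    also have "\<dots> = 2 * K + 1" by simp
    finally show ?thesis .
  qed
  then have "card (gvals K) ^ d \<le> (2 * K + 1) ^ d" by (rule power_mono) simp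
  finally show ?thesis .
qed

lemma countable_Dset: "countable (Dset d)"
  unfolding Dset_def by (rule countable_UN[OF countableI_type]) (rule countable_finite[OF finite_grid])

lemma tr_grid:
  assumes K: "0 < K" and x: "vec_norm d x \<le> 1"
  shows "tr K d x \<in> grid K d"
proof -
  define f where "f = restrict (\<lambda>i. real_of_int (tz (real K * x i)) / real K) {..<d}"
  have "f \<in> PiE {..<d} (\<lambda>_. gvals K)"
    unfolding f_def restrict_PiE_iff
  proof
    fix i assume "i \<in> {..<d}"
    then have "\<bar>x i\<bar> \<le> 1" using coord_le_norm[of i d x] x by simp
    then have "real K * \<bar>x i\<bar> \<le> real K * 1" by (intro mult_left_mono) auto
    then have "\<bar>real K * x i\<bar> \<le> real K" by (simp add: abs_mult)
    then have "\<bar>real_of_int (tz (real K * x i))\<bar> \<le> real K"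
      using tz_abs[of "real K * x i"] by linarith
    then have "tz (real K * x i) \<in> {- int K..int K}" by auto
    then show "real_of_int (tz (real K * x i)) / real K \<in> gvals K" unfolding gvals_def by auto
  qed
  moreover have "tr K d x = (\<lambda>i. if i < d then f i else 0)" unfolding tr_def f_def by auto
  ultimately show ?thesis unfolding grid_def by auto
qed

lemma tr_Dset: "0 < K \<Longrightarrow> vec_norm d x \<le> 1 \<Longrightarrow> tr K d x \<in> Dset d"
  unfolding Dset_def using tr_grid by auto

lemma tr_lim: "i < d \<Longrightarrow> (\<lambda>K. tr K d x i) \<longlonglongrightarrow> x i"
proof -
  assume i: "i < d"
  have "(\<lambda>K. x i - tr K d x i) \<longlonglongrightarrow> 0"
  proof (rule Lim_null_comparison[OF _ lim_1_over_n])
    show "\<forall>\<^sub>F K in sequentially. norm (x i - tr K d x i) \<le> 1 / real K"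
    proof (rule eventually_sequentiallyI[of 1])
      fix K :: nat assume "1 \<le> K"
      then show "norm (x i - tr K d x i) \<le> 1 / real K" using tr_err[of K i d x] i by simp
    qed
  qed
  then have "(\<lambda>K. x i - (x i - tr K d x i)) \<longlonglongrightarrow> x i - 0" by (intro tendsto_intros)
  then show ?thesis by simp
qed

lemma BW_fin:
  fixes X :: "nat \<Rightarrow> nat \<Rightarrow> real"
  assumes "\<And>n i. i < d \<Longrightarrow> \<bar>X n i\<bar> \<le> B"
  shows "\<exists>r l. strict_mono r \<and> (\<forall>i<d. (\<lambda>n. X (r n) i) \<longlonglongrightarrow> l i)"
  using assms
proof (induction d)
  case 0
  have "strict_mono (id :: nat \<Rightarrow> nat)" by (simp add: strict_mono_def)
  then show ?case by blast
next
  case (Suc d)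
  then obtain r l where r: "strict_mono r" and l: "\<forall>i<d. (\<lambda>n. X (r n) i) \<longlonglongrightarrow> l i" by force
  obtain f where f: "strict_mono f" and mf: "monoseq (\<lambda>n. X (r (f n)) d)"
    using seq_monosub[of "\<lambda>n. X (r n) d"] by blast
  have "Bseq (\<lambda>n. X (r (f n)) d)" using Suc.prems by (intro BseqI'[of _ B]) simp
  then have "convergent (\<lambda>n. X (r (f n)) d)" using mf by (rule Bseq_monoseq_convergent)
  then obtain L where L: "(\<lambda>n. X (r (f n)) d) \<longlonglongrightarrow> L" by (auto simp: convergent_def)
  define l' where "l' = l(d := L)"
  have "strict_mono (r \<circ> f)" using r f by (rule strict_mono_o)
  moreover have "\<forall>i<Suc d. (\<lambda>n. X ((r \<circ> f) n) i) \<longlonglongrightarrow> l' i"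
  proof (intro allI impI)
    fix i assume i: "i < Suc d"
    show "(\<lambda>n. X ((r \<circ> f) n) i) \<longlonglongrightarrow> l' i"
    proof (cases "i = d")
      case True then show ?thesis using L unfolding l'_def by simp
    next
      case False
      then have "i < d" using i by simp
      then have "((\<lambda>n. X (r n) i) \<circ> f) \<longlonglongrightarrow> l i" using l f by (intro LIMSEQ_subseq_LIMSEQ) auto
      then show ?thesis using False unfolding l'_def by (simp add: comp_def)
    qed
  qed
  ultimately show ?case by blast
qed

lemma vec_norm_lim:
  assumes "\<And>i. i < d \<Longrightarrow> (\<lambda>n. X n i) \<longlonglongrightarrow> x i"
  shows "(\<lambda>n. vec_norm d (X n)) \<longlonglongrightarrow> vec_norm d x"
  unfolding vec_norm_def using assms by (intro tendsto_intros) auto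

lemma compact_char:
  fixes F :: "(nat \<Rightarrow> real) \<Rightarrow> real" and g :: "nat \<Rightarrow> (nat \<Rightarrow> real) \<Rightarrow> real"
  assumes J: "finite J"
    and cF: "\<And>X x. (\<And>i. i < d \<Longrightarrow> (\<lambda>n. X n i) \<longlonglongrightarrow> x i) \<Longrightarrow> (\<lambda>n. F (X n)) \<longlonglongrightarrow> F x"
    and cg: "\<And>X x j. j \<in> J \<Longrightarrow> (\<And>i. i < d \<Longrightarrow> (\<lambda>n. X n i) \<longlonglongrightarrow> x i) \<Longrightarrow> (\<lambda>n. g j (X n)) \<longlonglongrightarrow> g j x"
  shows "(\<forall>x. vec_norm d x \<le> 1 \<longrightarrow> (\<forall>j\<in>J. 0 \<le> g j x) \<longrightarrow> F x \<le> C) \<longleftrightarrow>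
         (\<forall>k::nat. \<exists>n::nat. \<forall>y\<in>Dset d. vec_norm d y \<le> 1 \<longrightarrow> (\<forall>j\<in>J. - (1 / (real n + 1)) \<le> g j y) \<longrightarrow> F y \<le> C + 1 / (real k + 1))"
proof
  assume L: "\<forall>x. vec_norm d x \<le> 1 \<longrightarrow> (\<forall>j\<in>J. 0 \<le> g j x) \<longrightarrow> F x \<le> C"
  show "\<forall>k::nat. \<exists>n::nat. \<forall>y\<in>Dset d. vec_norm d y \<le> 1 \<longrightarrow> (\<forall>j\<in>J. - (1 / (real n + 1)) \<le> g j y) \<longrightarrow> F y \<le> C + 1 / (real k + 1)"
  proof (rule ccontr)
    assume "\<not> ?thesis"
    then obtain k where "\<forall>n::nat. \<exists>y. y \<in> Dset d \<and> vec_norm d y \<le> 1 \<and> (\<forall>j\<in>J. - (1 / (real n + 1)) \<le> g j y) \<and> \<not> F y \<le> C + 1 / (real k + 1)"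
      by blast
    then obtain Y where Y: "\<And>n. vec_norm d (Y n) \<le> 1" "\<And>n. \<forall>j\<in>J. - (1 / (real n + 1)) \<le> g j (Y n)"
        "\<And>n. C + 1 / (real k + 1) < F (Y n)"
      by (metis not_le)
    have "\<And>n i. i < d \<Longrightarrow> \<bar>Y n i\<bar> \<le> 1" using Y(1) coord_le_norm by (meson order_trans)
    then obtain r l where r: "strict_mono r" and l: "\<forall>i<d. (\<lambda>n. Y (r n) i) \<longlonglongrightarrow> l i"
      using BW_fin[of d Y 1] by blast
    define x where "x = (\<lambda>i. if i < d then l i else 0)"
    have cx: "\<And>i. i < d \<Longrightarrow> (\<lambda>n. Y (r n) i) \<longlonglongrightarrow> x i" using l unfolding x_def by simp
    have "vec_norm d x \<le> 1"
      by (rule tendsto_upperbound[OF vec_norm_lim[OF cx]]) (auto simp: Y(1))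
    moreover have "\<forall>j\<in>J. 0 \<le> g j x"
    proof
      fix j assume j: "j \<in> J"
      have lim0: "(\<lambda>n. - inverse (real (Suc n))) \<longlonglongrightarrow> 0"
        using tendsto_minus[OF LIMSEQ_inverse_real_of_nat] by simp
      show "0 \<le> g j x"
      proof (rule tendsto_le[OF _ cg[OF j cx] lim0])
        show "\<forall>\<^sub>F n in sequentially. - inverse (real (Suc n)) \<le> g j (Y (r n))"
        proof (intro always_eventually allI)
          fix n
          have "n \<le> r n" using r by (rule seq_suble)
          then have "inverse (real (Suc (r n))) \<le> inverse (real (Suc n))"
            by (intro le_imp_inverse_le) auto
          moreover have "- (1 / (real (r n) + 1)) \<le> g j (Y (r n))" using Y(2) j by blast
          ultimately show "- inverse (real (Suc n)) \<le> g j (Y (r n))"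
            by (simp add: inverse_eq_divide add.commute)
        qed
      qed simp
    qed
    ultimately have "F x \<le> C" using L by blast
    moreover have "C + 1 / (real k + 1) \<le> F x"
    proof (rule tendsto_lowerbound[OF cF[OF cx]])
      show "\<forall>\<^sub>F i in sequentially. C + 1 / (real k + 1) \<le> F (Y (r i))"
        using Y(3) by (intro always_eventually allI less_imp_le) 
    qed auto
    moreover have "0 < 1 / (real k + 1)" by simp
    ultimately show False by linarith
  qed
next
  assume R: "\<forall>k::nat. \<exists>n::nat. \<forall>y\<in>Dset d. vec_norm d y \<le> 1 \<longrightarrow> (\<forall>j\<in>J. - (1 / (real n + 1)) \<le> g j y) \<longrightarrow> F y \<le> C + 1 / (real k + 1)"
  show "\<forall>x. vec_norm d x \<le> 1 \<longrightarrow> (\<forall>j\<in>J. 0 \<le> g j x) \<longrightarrow> F x \<le> C"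
  proof (intro allI impI)
    fix x assume x: "vec_norm d x \<le> 1" and gx: "\<forall>j\<in>J. 0 \<le> g j x"
    define Y where "Y K = tr (Suc K) d x" for K
    have cY: "\<And>i. i < d \<Longrightarrow> (\<lambda>K. Y K i) \<longlonglongrightarrow> x i"
      unfolding Y_def using tr_lim by (intro LIMSEQ_Suc) auto
    have YD: "\<And>K. Y K \<in> Dset d" unfolding Y_def using x by (intro tr_Dset) auto
    have Yn: "\<And>K. vec_norm d (Y K) \<le> 1" unfolding Y_def using tr_norm x order_trans by blast
    have k: "F x \<le> C + 1 / (real k + 1)" for k :: nat
    proof -
      obtain n where n: "\<forall>y\<in>Dset d. vec_norm d y \<le> 1 \<longrightarrow> (\<forall>j\<in>J. - (1 / (real n + 1)) \<le> g j y) \<longrightarrow> F y \<le> C + 1 / (real k + 1)"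
        using R by blast
      have "\<forall>j\<in>J. eventually (\<lambda>K. - (1 / (real n + 1)) < g j (Y K)) sequentially"
      proof
        fix j assume j: "j \<in> J"
        have "- (1 / (real n + 1)) < g j x" using gx j
          by (smt (verit) divide_pos_pos of_nat_less_0_iff)
        then show "eventually (\<lambda>K. - (1 / (real n + 1)) < g j (Y K)) sequentially"
          using cg[OF j cY] by (rule order_tendstoD(1)[rotated])
      qed
      then have "eventually (\<lambda>K. \<forall>j\<in>J. - (1 / (real n + 1)) < g j (Y K)) sequentially"
        by (rule eventually_ball_finite[OF J])
      then have "eventually (\<lambda>K. F (Y K) \<le> C + 1 / (real k + 1)) sequentially"
      proof eventually_elim
        case (elim K)
        then have "\<forall>j\<in>J. - (1 / (real n + 1)) \<le> g j (Y K)" by (auto intro: less_imp_le)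
        then show ?case using n YD Yn by blast
      qed
      then show ?thesis using tendsto_upperbound[OF cF[OF cY]] by auto
    qed
    show "F x \<le> C"
    proof (rule ccontr)
      assume "\<not> F x \<le> C"
      then have "0 < F x - C" by simp
      then obtain n :: nat where n: "0 < n" "inverse (real n) < F x - C"
        using ex_inverse_of_nat_less by blast
      have "F x \<le> C + 1 / (real (n - 1) + 1)" by (rule k)
      also have "real (n - 1) + 1 = real n" using n by simp
      finally show False using n by (simp add: inverse_eq_divide)
    qed
  qed
qed

lemma char2:
  assumes R: "0 < R"
  shows "(\<forall>V. fro_norm m d (\<lambda>jk. V jk - W jk) \<le> R \<longrightarrow> \<bar>frob_inner m d g V\<bar> \<le> C)
     \<longleftrightarrow> \<bar>frob_inner m d g W\<bar> + R * fro_norm m d g \<le> C"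
proof
  assume H: "\<forall>V. fro_norm m d (\<lambda>jk. V jk - W jk) \<le> R \<longrightarrow> \<bar>frob_inner m d g V\<bar> \<le> C"
  define N where "N = fro_norm m d g"
  show "\<bar>frob_inner m d g W\<bar> + R * fro_norm m d g \<le> C"
  proof (cases "N = 0")
    case True
    have z: "fro_norm m d (\<lambda>jk. W jk - W jk) = 0" unfolding fro_norm_def by simp
    then show ?thesis using H[rule_format, of W] R True N_def by simp
  next
    case False
    then have N0: "0 < N" using fro_nonneg[of m d g] N_def by simp
    define t where "t = (if 0 \<le> frob_inner m d g W then R / N else - R / N)"
    define V where "V = (\<lambda>p. W p + t * g p)"
    have dV: "(\<lambda>jk. V jk - W jk) = (\<lambda>p. t * g p)" unfolding V_def by auto
    have "fro_norm m d (\<lambda>jk. V jk - W jk) = \<bar>t\<bar> * N" unfolding dV fro_scale N_def ..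
    also have "\<bar>t\<bar> * N = R" unfolding t_def using N0 R by auto
    finally have "fro_norm m d (\<lambda>jk. V jk - W jk) \<le> R" by simp
    then have h: "\<bar>frob_inner m d g V\<bar> \<le> C" using H by blast
    have fV: "frob_inner m d g V = frob_inner m d g W + t * N\<^sup>2"
      unfolding V_def N_def by (simp add: fi_add fi_scale fi_self)
    have "\<bar>frob_inner m d g V\<bar> = \<bar>frob_inner m d g W\<bar> + R * N"
    proof (cases "0 \<le> frob_inner m d g W")
      case True
      then have "t * N\<^sup>2 = R * N" unfolding t_def using N0 by (simp add: power2_eq_square)
      then show ?thesis unfolding fV using True R N0 by simp
    next
      case False
      then have "t * N\<^sup>2 = - (R * N)" unfolding t_def using N0 by (simp add: power2_eq_square)
      moreover have "0 < R * N" using R N0 by simp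
      ultimately show ?thesis unfolding fV using False by (simp add: abs_if)
    qed
    then show ?thesis using h N_def by simp
  qed
next
  assume H: "\<bar>frob_inner m d g W\<bar> + R * fro_norm m d g \<le> C"
  show "\<forall>V. fro_norm m d (\<lambda>jk. V jk - W jk) \<le> R \<longrightarrow> \<bar>frob_inner m d g V\<bar> \<le> C"
  proof (intro allI impI)
    fix V assume V: "fro_norm m d (\<lambda>jk. V jk - W jk) \<le> R"
    have "frob_inner m d g V = frob_inner m d g (\<lambda>jk. V jk - W jk) + frob_inner m d g W"
      by (simp add: fi_diff)
    then have "\<bar>frob_inner m d g V\<bar> \<le> \<bar>frob_inner m d g (\<lambda>jk. V jk - W jk)\<bar> + \<bar>frob_inner m d g W\<bar>"
      by simp
    also have "\<dots> \<le> fro_norm m d g * fro_norm m d (\<lambda>jk. V jk - W jk) + \<bar>frob_inner m d g W\<bar>"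
      using fi_CS by (intro add_mono) auto
    also have "\<dots> \<le> fro_norm m d g * R + \<bar>frob_inner m d g W\<bar>"
      using V fro_nonneg by (intro add_mono mult_left_mono) auto
    finally show "\<bar>frob_inner m d g V\<bar> \<le> C" using H by (simp add: mult.commute)
  qed
qed

definition Phi :: "nat \<Rightarrow> nat \<Rightarrow> real \<Rightarrow> (nat \<Rightarrow> real) \<Rightarrow> (nat \<Rightarrow> real) \<Rightarrow> (nat \<times> nat \<Rightarrow> real) \<Rightarrow> nat set \<Rightarrow> real" where
  "Phi m d R x a W J = \<bar>Sfun m d x a W\<bar> + R * vec_norm d x * sqrt (\<Sum>j\<in>J. (a j)\<^sup>2)"

definition Jset :: "nat \<Rightarrow> nat \<Rightarrow> (nat \<Rightarrow> real) \<Rightarrow> (nat \<times> nat \<Rightarrow> real) \<Rightarrow> nat set" where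
  "Jset m d x W = {j\<in>{..<m}. 0 \<le> (\<Sum>i<d. W (j,i) * x i)}"

lemma actsum_Jset: "actsum m d x a W = (\<Sum>j\<in>Jset m d x W. (a j)\<^sup>2)"
proof -
  have "(\<Sum>j\<in>{j\<in>{..<m}. 0 \<le> (\<Sum>i<d. W (j,i) * x i)}. (a j)\<^sup>2) = (\<Sum>j<m. if 0 \<le> (\<Sum>i<d. W (j,i) * x i) then (a j)\<^sup>2 else 0)"
    by (rule sum.inter_filter) simp
  also have "\<dots> = actsum m d x a W" unfolding actsum_def by (intro sum.cong) auto
  finally show ?thesis unfolding Jset_def by simp
qed

lemma Phi_mono:
  assumes "J \<subseteq> J'" "finite J'" "0 \<le> R"
  shows "Phi m d R x a W J \<le> Phi m d R x a W J'"
proof -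
  have "(\<Sum>j\<in>J. (a j)\<^sup>2) \<le> (\<Sum>j\<in>J'. (a j)\<^sup>2)" using assms by (intro sum_mono2) auto
  then have "sqrt (\<Sum>j\<in>J. (a j)\<^sup>2) \<le> sqrt (\<Sum>j\<in>J'. (a j)\<^sup>2)" by simp
  moreover have "0 \<le> R * vec_norm d x" using assms by (simp add: vec_norm_def sum_nonneg)
  ultimately show ?thesis unfolding Phi_def by (simp add: mult_left_mono)
qed

lemma rowdot_lim:
  fixes X :: "nat \<Rightarrow> nat \<Rightarrow> real" and W :: "nat \<times> nat \<Rightarrow> real"
  assumes "\<And>i. i < d \<Longrightarrow> (\<lambda>n. X n i) \<longlonglongrightarrow> x i"
  shows "(\<lambda>n. \<Sum>i<d. W (j,i) * X n i) \<longlonglongrightarrow> (\<Sum>i<d. W (j,i) * x i)"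
  by (rule tendsto_sum) (use assms in \<open>auto intro: tendsto_intros\<close>)

lemma Phi_lim:
  fixes X :: "nat \<Rightarrow> nat \<Rightarrow> real"
  assumes "\<And>i. i < d \<Longrightarrow> (\<lambda>n. X n i) \<longlonglongrightarrow> x i"
  shows "(\<lambda>n. Phi m d R (X n) a W J) \<longlonglongrightarrow> Phi m d R x a W J"
  unfolding Phi_def Sfun_def using assms rowdot_lim[OF assms] vec_norm_lim[OF assms]
  by (intro tendsto_intros rowdot_lim) auto

lemma E2_char:
  assumes rho: "0 < \<rho>" and m: "0 < m" and R: "0 < R"
  shows "(\<forall>(V :: nat \<times> nat \<Rightarrow> real) (x :: nat \<Rightarrow> real).
            fro_norm m d (\<lambda>jk. V jk - W jk) \<le> R \<longrightarrow> vec_norm d x \<le> 1 \<longrightarrow>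
            \<bar>frob_inner m d (grad_f \<rho> m d a W x) V\<bar> \<le> C)
     \<longleftrightarrow> (\<forall>J\<in>Pow {..<m}. \<forall>k::nat. \<exists>n::nat. \<forall>y\<in>Dset d. vec_norm d y \<le> 1 \<longrightarrow>
            (\<forall>j\<in>J. - (1 / (real n + 1)) \<le> (\<Sum>i<d. W (j,i) * y i)) \<longrightarrow>
            Phi m d R y a W J \<le> C * sqrt (real m) / \<rho> + 1 / (real k + 1))"
proof -
  define C' where "C' = C * sqrt (real m) / \<rho>"
  have s3: "(\<forall>V. fro_norm m d (\<lambda>jk. V jk - W jk) \<le> R \<longrightarrow> \<bar>frob_inner m d (grad_f \<rho> m d a W x) V\<bar> \<le> C)
      \<longleftrightarrow> Phi m d R x a W (Jset m d x W) \<le> C'" for x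
  proof -
    have "\<bar>frob_inner m d (grad_f \<rho> m d a W x) W\<bar> + R * fro_norm m d (grad_f \<rho> m d a W x)
        = \<rho> / sqrt (real m) * Phi m d R x a W (Jset m d x W)"
      unfolding grad_W grad_norm[OF less_imp_le[OF rho]] Phi_def actsum_Jset
      using rho m by (simp add: abs_mult algebra_simps)
    also have "\<dots> \<le> C \<longleftrightarrow> Phi m d R x a W (Jset m d x W) \<le> C'"
      unfolding C'_def using rho m by (simp add: field_simps)
    finally show ?thesis using char2[OF R] by simp
  qed
  have s4: "(\<forall>x. vec_norm d x \<le> 1 \<longrightarrow> Phi m d R x a W (Jset m d x W) \<le> C')
      \<longleftrightarrow> (\<forall>J\<in>Pow {..<m}. \<forall>x. vec_norm d x \<le> 1 \<longrightarrow> (\<forall>j\<in>J. 0 \<le> (\<Sum>i<d. W (j,i) * x i)) \<longrightarrow> Phi m d R x a W J \<le> C')"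
  proof
    assume H: "\<forall>x. vec_norm d x \<le> 1 \<longrightarrow> Phi m d R x a W (Jset m d x W) \<le> C'"
    show "\<forall>J\<in>Pow {..<m}. \<forall>x. vec_norm d x \<le> 1 \<longrightarrow> (\<forall>j\<in>J. 0 \<le> (\<Sum>i<d. W (j,i) * x i)) \<longrightarrow> Phi m d R x a W J \<le> C'"
    proof (intro ballI allI impI)
      fix J x assume J: "J \<in> Pow {..<m}" and x: "vec_norm d x \<le> 1" and j: "\<forall>j\<in>J. 0 \<le> (\<Sum>i<d. W (j,i) * x i)"
      have "J \<subseteq> Jset m d x W" using J j unfolding Jset_def by auto
      then have "Phi m d R x a W J \<le> Phi m d R x a W (Jset m d x W)"
        using R by (intro Phi_mono) (auto simp: Jset_def)
      also have "\<dots> \<le> C'" using H x by blast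
      finally show "Phi m d R x a W J \<le> C'" .
    qed
  next
    assume H: "\<forall>J\<in>Pow {..<m}. \<forall>x. vec_norm d x \<le> 1 \<longrightarrow> (\<forall>j\<in>J. 0 \<le> (\<Sum>i<d. W (j,i) * x i)) \<longrightarrow> Phi m d R x a W J \<le> C'"
    show "\<forall>x. vec_norm d x \<le> 1 \<longrightarrow> Phi m d R x a W (Jset m d x W) \<le> C'"
    proof (intro allI impI)
      fix x assume x: "vec_norm d x \<le> 1"
      have "Jset m d x W \<in> Pow {..<m}" unfolding Jset_def by auto
      moreover have "\<forall>j\<in>Jset m d x W. 0 \<le> (\<Sum>i<d. W (j,i) * x i)" unfolding Jset_def by auto
      ultimately show "Phi m d R x a W (Jset m d x W) \<le> C'" using H x by blast
    qed
  qed
  have s5: "(\<forall>x. vec_norm d x \<le> 1 \<longrightarrow> (\<forall>j\<in>J. 0 \<le> (\<Sum>i<d. W (j,i) * x i)) \<longrightarrow> Phi m d R x a W J \<le> C')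
      \<longleftrightarrow> (\<forall>k::nat. \<exists>n::nat. \<forall>y\<in>Dset d. vec_norm d y \<le> 1 \<longrightarrow>
            (\<forall>j\<in>J. - (1 / (real n + 1)) \<le> (\<Sum>i<d. W (j,i) * y i)) \<longrightarrow>
            Phi m d R y a W J \<le> C' + 1 / (real k + 1))" if J: "J \<in> Pow {..<m}" for J
  proof (rule compact_char[where F = "\<lambda>y. Phi m d R y a W J" and g = "\<lambda>j y. \<Sum>i<d. W (j,i) * y i"])
    show "finite J" using J finite_subset by auto
  next
    fix X :: "nat \<Rightarrow> nat \<Rightarrow> real" and x
    assume "\<And>i. i < d \<Longrightarrow> (\<lambda>n. X n i) \<longlonglongrightarrow> x i"
    then show "(\<lambda>n. Phi m d R (X n) a W J) \<longlonglongrightarrow> Phi m d R x a W J" by (rule Phi_lim)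
  next
    fix X :: "nat \<Rightarrow> nat \<Rightarrow> real" and x j
    assume "\<And>i. i < d \<Longrightarrow> (\<lambda>n. X n i) \<longlonglongrightarrow> x i"
    then show "(\<lambda>n. \<Sum>i<d. W (j,i) * X n i) \<longlonglongrightarrow> (\<Sum>i<d. W (j,i) * x i)" by (rule rowdot_lim)
  qed
  have "(\<forall>(V :: nat \<times> nat \<Rightarrow> real) (x :: nat \<Rightarrow> real).
            fro_norm m d (\<lambda>jk. V jk - W jk) \<le> R \<longrightarrow> vec_norm d x \<le> 1 \<longrightarrow>
            \<bar>frob_inner m d (grad_f \<rho> m d a W x) V\<bar> \<le> C)
      \<longleftrightarrow> (\<forall>x. vec_norm d x \<le> 1 \<longrightarrow> (\<forall>V. fro_norm m d (\<lambda>jk. V jk - W jk) \<le> R \<longrightarrow> \<bar>frob_inner m d (grad_f \<rho> m d a W x) V\<bar> \<le> C))"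
    by blast
  also have "\<dots> \<longleftrightarrow> (\<forall>x. vec_norm d x \<le> 1 \<longrightarrow> Phi m d R x a W (Jset m d x W) \<le> C')"
    using s3 by simp
  also have "\<dots> \<longleftrightarrow> (\<forall>J\<in>Pow {..<m}. \<forall>x. vec_norm d x \<le> 1 \<longrightarrow> (\<forall>j\<in>J. 0 \<le> (\<Sum>i<d. W (j,i) * x i)) \<longrightarrow> Phi m d R x a W J \<le> C')"
    by (rule s4)
  also have "\<dots> \<longleftrightarrow> (\<forall>J\<in>Pow {..<m}. \<forall>k::nat. \<exists>n::nat. \<forall>y\<in>Dset d. vec_norm d y \<le> 1 \<longrightarrow>
            (\<forall>j\<in>J. - (1 / (real n + 1)) \<le> (\<Sum>i<d. W (j,i) * y i)) \<longrightarrow>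
            Phi m d R y a W J \<le> C' + 1 / (real k + 1))"
    by (rule ball_cong[OF refl]) (rule s5)
  finally show ?thesis unfolding C'_def .
qed

lemma meas_Phi:
  assumes J: "J \<subseteq> {..<m}"
  shows "(\<lambda>\<omega>. Phi m d R y (fst \<omega>) (snd \<omega>) J) \<in> borel_measurable (init_measure m d)"
  unfolding Phi_def
proof (intro borel_measurable_add borel_measurable_abs meas_S borel_measurable_times measurable_const)
  have "(\<lambda>\<omega>. \<Sum>j\<in>J. (fst \<omega> j)\<^sup>2) \<in> borel_measurable (init_measure m d)"
    using J by (intro borel_measurable_sum borel_measurable_power meas_a) auto
  then show "(\<lambda>\<omega>. sqrt (\<Sum>j\<in>J. (fst \<omega> j)\<^sup>2)) \<in> borel_measurable (init_measure m d)"
    by (rule measurable_compose[OF _ borel_measurable_sqrt])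
qed (auto simp: space_borel)

lemma E2_sets:
  "{\<omega>\<in>space (init_measure m d). \<forall>J\<in>Pow {..<m}. \<forall>k::nat. \<exists>n::nat. \<forall>y\<in>Dset d. vec_norm d y \<le> 1 \<longrightarrow>
      (\<forall>j\<in>J. - (1 / (real n + 1)) \<le> (\<Sum>i<d. snd \<omega> (j,i) * y i)) \<longrightarrow>
      Phi m d R y (fst \<omega>) (snd \<omega>) J \<le> C' + 1 / (real k + 1)} \<in> sets (init_measure m d)"
proof (intro sets.sets_Collect_countable_All' sets.sets_Collect_countable_All sets.sets_Collect_countable_Ex
    sets.sets_Collect_imp sets.sets_Collect_const)
  fix J k n y assume J: "J \<in> Pow {..<m}"
  show "{\<omega>\<in>space (init_measure m d). Phi m d R y (fst \<omega>) (snd \<omega>) J \<le> C' + 1 / (real k + 1)} \<in> sets (init_measure m d)"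
    using J by (intro sets_le meas_Phi) auto
  fix j assume "j \<in> J"
  then show "{\<omega>\<in>space (init_measure m d). - (1 / (real n + 1)) \<le> (\<Sum>i<d. snd \<omega> (j,i) * y i)} \<in> sets (init_measure m d)"
    using J by (intro sets_ge meas_rowdot) auto
next
  fix J assume "J \<in> Pow {..<m}"
  then show "countable J" by (auto intro: countable_finite finite_subset)
qed (auto intro: countable_finite countable_Dset)

lemma max0_lip: "\<bar>max s 0 - max t 0\<bar> \<le> \<bar>s - (t::real)\<bar>"
  by (auto simp: max_def)

lemma S_lip:
  assumes a: "\<forall>j<m. \<bar>a j\<bar> \<le> 1"
  shows "\<bar>Sfun m d x a W - Sfun m d y a W\<bar> \<le> (\<Sum>j<m. \<Sum>i<d. \<bar>W (j,i)\<bar> * \<bar>x i - y i\<bar>)"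
proof -
  have "Sfun m d x a W - Sfun m d y a W = (\<Sum>j<m. a j * (max (\<Sum>i<d. W (j,i) * x i) 0 - max (\<Sum>i<d. W (j,i) * y i) 0))"
    unfolding Sfun_def by (simp add: sum_subtractf right_diff_distrib)
  also have "\<bar>\<dots>\<bar> \<le> (\<Sum>j<m. \<bar>a j * (max (\<Sum>i<d. W (j,i) * x i) 0 - max (\<Sum>i<d. W (j,i) * y i) 0)\<bar>)"
    by (rule sum_abs)
  also have "\<dots> \<le> (\<Sum>j<m. \<Sum>i<d. \<bar>W (j,i)\<bar> * \<bar>x i - y i\<bar>)"
  proof (rule sum_mono)
    fix j assume j: "j \<in> {..<m}"
    have "\<bar>a j * (max (\<Sum>i<d. W (j,i) * x i) 0 - max (\<Sum>i<d. W (j,i) * y i) 0)\<bar>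
        = \<bar>a j\<bar> * \<bar>max (\<Sum>i<d. W (j,i) * x i) 0 - max (\<Sum>i<d. W (j,i) * y i) 0\<bar>" by (simp add: abs_mult)
    also have "\<dots> \<le> 1 * \<bar>(\<Sum>i<d. W (j,i) * x i) - (\<Sum>i<d. W (j,i) * y i)\<bar>"
      using a j max0_lip by (intro mult_mono) auto
    also have "(\<Sum>i<d. W (j,i) * x i) - (\<Sum>i<d. W (j,i) * y i) = (\<Sum>i<d. W (j,i) * (x i - y i))"
      by (simp add: sum_subtractf right_diff_distrib)
    also have "1 * \<bar>\<dots>\<bar> \<le> (\<Sum>i<d. \<bar>W (j,i) * (x i - y i)\<bar>)" using sum_abs by simp
    also have "\<dots> = (\<Sum>i<d. \<bar>W (j,i)\<bar> * \<bar>x i - y i\<bar>)" by (simp add: abs_mult)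
    finally show "\<bar>a j * (max (\<Sum>i<d. W (j,i) * x i) 0 - max (\<Sum>i<d. W (j,i) * y i) 0)\<bar> \<le> (\<Sum>i<d. \<bar>W (j,i)\<bar> * \<bar>x i - y i\<bar>)" .
  qed
  finally show ?thesis .
qed

lemma det2:
  assumes rho: "0 < \<rho>" and m: "0 < m" and K: "0 < K"
    and a: "\<forall>j<m. \<bar>a j\<bar> \<le> 1"
    and Wb: "\<forall>p\<in>{..<m}\<times>{..<d}. \<bar>W p\<bar> \<le> Mt"
    and net: "\<forall>y\<in>grid K d. \<bar>Sfun m d y a W\<bar> \<le> c * sqrt (real m) * vec_norm d y"
    and c: "0 \<le> c"
    and x: "vec_norm d x \<le> 1" and V: "fro_norm m d (\<lambda>jk. V jk - W jk) \<le> R"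
  shows "\<bar>frob_inner m d (grad_f \<rho> m d a W x) V\<bar> \<le> \<rho> * R + \<rho> * c + \<rho> * (sqrt (real m) * real d / real K) * Mt"
proof -
  define g where "g = grad_f \<rho> m d a W x"
  have "frob_inner m d g V = frob_inner m d g (\<lambda>jk. V jk - W jk) + frob_inner m d g W"
    by (simp add: fi_diff)
  then have "\<bar>frob_inner m d g V\<bar> \<le> \<bar>frob_inner m d g (\<lambda>jk. V jk - W jk)\<bar> + \<bar>frob_inner m d g W\<bar>"
    by simp
  also have "\<dots> \<le> fro_norm m d g * fro_norm m d (\<lambda>jk. V jk - W jk) + \<bar>frob_inner m d g W\<bar>"
    using fi_CS by (intro add_mono) auto
  also have "fro_norm m d g * fro_norm m d (\<lambda>jk. V jk - W jk) \<le> \<rho> * R"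
  proof (rule mult_mono)
    have "fro_norm m d g \<le> \<rho> * vec_norm d x" unfolding g_def using rho m a by (intro grad_norm_le) auto
    also have "\<dots> \<le> \<rho> * 1" using x rho by (intro mult_left_mono) auto
    finally show "fro_norm m d g \<le> \<rho>" by simp
  qed (use V rho fro_nonneg in auto)
  also have "\<bar>frob_inner m d g W\<bar> \<le> \<rho> * c + \<rho> * (sqrt (real m) * real d / real K) * Mt"
  proof -
    define y where "y = tr K d x"
    have yg: "y \<in> grid K d" unfolding y_def using K x by (rule tr_grid)
    have yn: "vec_norm d y \<le> 1" unfolding y_def using tr_norm x order_trans by blast
    have Sy: "\<bar>Sfun m d y a W\<bar> \<le> c * sqrt (real m)"
    proof -
      have "\<bar>Sfun m d y a W\<bar> \<le> c * sqrt (real m) * vec_norm d y" using net yg by blast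
      also have "\<dots> \<le> c * sqrt (real m) * 1" using yn c by (intro mult_left_mono) auto
      finally show ?thesis by simp
    qed
    have "\<bar>Sfun m d x a W - Sfun m d y a W\<bar> \<le> (\<Sum>j<m. \<Sum>i<d. \<bar>W (j,i)\<bar> * \<bar>x i - y i\<bar>)"
      by (rule S_lip[OF a])
    also have "\<dots> \<le> (\<Sum>j<m. \<Sum>i<d. Mt * (1 / real K))"
    proof (intro sum_mono mult_mono)
      fix j i assume "j \<in> {..<m}" "i \<in> {..<d}"
      then show "\<bar>W (j,i)\<bar> \<le> Mt" "\<bar>x i - y i\<bar> \<le> 1 / real K" "0 \<le> Mt"
        using Wb tr_err[OF K, of i d x] unfolding y_def by (auto intro: order_trans[OF abs_ge_zero])
    qed auto
    also have "\<dots> = real m * real d * Mt / real K" by simp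
    finally have Sxy: "\<bar>Sfun m d x a W - Sfun m d y a W\<bar> \<le> real m * real d * Mt / real K" .
    have "\<bar>Sfun m d x a W\<bar> \<le> c * sqrt (real m) + real m * real d * Mt / real K"
      using Sy Sxy by linarith
    then have "\<rho> / sqrt (real m) * \<bar>Sfun m d x a W\<bar> \<le> \<rho> / sqrt (real m) * (c * sqrt (real m) + real m * real d * Mt / real K)"
      using rho by (intro mult_left_mono) auto
    also have "\<dots> = \<rho> * c + \<rho> * (sqrt (real m) * real d / real K) * Mt"
    proof -
      have "real m / sqrt (real m) = sqrt (real m)" using m by (simp add: real_div_sqrt)
      then show ?thesis using m K by (simp add: field_simps)
    qed
    finally show ?thesis unfolding g_def grad_W using rho by (simp add: abs_mult)
  qed
  finally show ?thesis unfolding g_def by simp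
qed

lemma powr_32: "0 < d \<Longrightarrow> real d powr (3/2) = real d * sqrt (real d)"
proof -
  assume d: "0 < d"
  have e: "real d powr (1 + 1/2) = real d powr 1 * real d powr (1/2)" by (rule powr_add)
  have "real d powr (3/2) = real d powr 1 * real d powr (1/2)" using e by simp
  also have "\<dots> = real d * sqrt (real d)" using d by (simp add: powr_half_sqrt)
  finally show ?thesis .
qed

lemma card_bound:
  assumes m: "0 < m" and d: "0 < d"
  defines "K \<equiv> nat \<lceil>sqrt (real m) * real d / 5\<rceil>"
  shows "0 < K" and "sqrt (real m) * real d / real K \<le> 5"
    and "real ((2*K+1)^d) \<le> 6 * (real m * real d powr (3/2)) ^ d"
proof -
  define u where "u = sqrt (real m) * real d"
  have u0: "0 < u" unfolding u_def using m d by simp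
  have c0: "0 \<le> \<lceil>u/5\<rceil>" using u0 by (simp add: ceiling_le_zero)
  have Kr: "real K = of_int \<lceil>u/5\<rceil>" unfolding K_def u_def[symmetric] using c0 by simp
  have K1: "u/5 \<le> real K" unfolding Kr by (rule le_of_int_ceiling)
  have K2: "real K < u/5 + 1" unfolding Kr using ceiling_correct[of "u/5"] by linarith
  show K0: "0 < K" using K1 u0 by (cases K) auto
  show "sqrt (real m) * real d / real K \<le> 5" unfolding u_def[symmetric] using K1 K0 by (simp add: field_simps)
  define B where "B = real m * (real d * sqrt (real d))"
  have Bpow: "real m * real d powr (3/2) = B" unfolding B_def using d by (simp add: powr_32)
  have sm: "sqrt (real m) \<le> real m"
  proof -
    have "1 \<le> sqrt (real m)" using m by simp
    then have "sqrt (real m) * 1 \<le> sqrt (real m) * sqrt (real m)" by (intro mult_left_mono) auto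
    then show ?thesis by simp
  qed
  have sd: "1 \<le> sqrt (real d)" using d by simp
  have uB: "u \<le> B"
  proof -
    have "u = sqrt (real m) * real d * 1" unfolding u_def by simp
    also have "\<dots> \<le> real m * real d * sqrt (real d)" using sm sd by (intro mult_mono) auto
    finally show ?thesis unfolding B_def by (simp add: mult_ac)
  qed
  have "real ((2*K+1)^d) = (2 * real K + 1) ^ d" by (simp add: add.commute)
  also have "\<dots> \<le> 6 * B ^ d"
  proof (cases "d = 1")
    case True
    have "2 * real K + 1 \<le> 2 * (u/5 + 1) + 1" using K2 by simp
    also have "\<dots> \<le> 6 * real m" unfolding u_def using True sm m by simp
    finally show ?thesis using True unfolding B_def by simp
  next
    case False
    then have d2: "2 \<le> d" using d by simp
    show ?thesis
    proof (cases "d = 2 \<and> m = 1")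
      case True
      have "u = 2" unfolding u_def using True by simp
      then have "u / 5 < 1" by simp
      then have "real K < 2" using K2 by simp
      then have "K = 1" using K0 by simp
      moreover have "B ^ 2 = 8" unfolding B_def using True by (simp add: power_mult_distrib)
      ultimately show ?thesis using True by simp
    next
      case False
      have "2 * real K + 1 \<le> B"
      proof (cases "K = 1")
        case True
        show ?thesis
        proof (cases "d = 2")
          case True
          then have "2 \<le> m" using False m by simp
          then have "real m * (2 * 1) \<le> B" unfolding B_def using True
            by (intro mult_mono) auto
          moreover have "(2::real) \<le> real m" using \<open>2 \<le> m\<close> by simp
          ultimately show ?thesis using \<open>K = 1\<close> by simp
        next
          case False
          then have "3 \<le> d" using d2 by simp
          then have "1 * (3 * 1) \<le> real m * (real d * sqrt (real d))" using m sd
            by (intro mult_mono) auto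
          then show ?thesis using \<open>K = 1\<close> unfolding B_def by simp
        qed
      next
        case False
        then have "2 \<le> K" using K0 by simp
        then have "5 < u" using K2 by simp
        then have "2 * real K + 1 < u" using K2 by simp
        then show ?thesis using uB by simp
      qed
      then have "(2 * real K + 1) ^ d \<le> B ^ d" by (rule power_mono) simp
      also have "\<dots> \<le> 6 * B ^ d" using uB u0 by simp
      finally show ?thesis .
    qed
  qed
  finally show "real ((2*K+1)^d) \<le> 6 * (real m * real d powr (3/2)) ^ d" unfolding Bpow .
qed

lemma final_ineq:
  assumes rho: "0 < \<rho>" and R: "1 \<le> R" and m: "0 < m" and d: "0 < d" and dl: "0 < \<delta>" "\<delta> < 1"
    and r: "0 \<le> r" "r \<le> 5"
  shows "\<rho> * R + \<rho> * (ln (1/\<delta>) + 4) + \<rho> * r * (ln (2 * real m * real d / \<delta>) + 1/2)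
         \<le> 18 * R * \<rho> * ln (exp 1 * real m * real d / \<delta>)"
proof -
  define l where "l = ln (1/\<delta>)"
  define A where "A = ln (real m) + ln (real d) + l"
  have l0: "0 < l" unfolding l_def using dl by simp
  have lm: "0 \<le> ln (real m)" using m by simp
  have ld: "0 \<le> ln (real d)" using d by simp
  have A0: "0 \<le> A" unfolding A_def using l0 lm ld by simp
  have e1: "ln (2 * real m * real d / \<delta>) = ln 2 + A"
    unfolding A_def l_def using m d dl by (simp add: ln_mult ln_div)
  have e2: "ln (exp 1 * real m * real d / \<delta>) = 1 + A"
    unfolding A_def l_def using m d dl by (simp add: ln_mult ln_div)
  have ln2: "ln (2::real) \<le> 1" using ln_le_minus_one[of 2] by simp
  have ln2': "0 \<le> ln (2::real)" by simp
  have Mt0: "0 \<le> ln 2 + A + 1/2" using A0 ln2' by simp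
  define Mt where "Mt = ln 2 + A + 1/2"
  have "r * Mt \<le> 5 * Mt" using r Mt0 unfolding Mt_def by (intro mult_right_mono) auto
  moreover have "A \<le> R * A" using R A0 mult_right_mono[of 1 R A] by simp
  moreover have "l \<le> A" unfolding A_def using lm ld by simp
  moreover have "Mt \<le> A + 3/2" unfolding Mt_def using ln2 by simp
  ultimately have "R + (l + 4) + r * Mt \<le> 18 * R + 18 * (R * A)"
    using R A0 by linarith
  also have "\<dots> = 18 * R * (1 + A)" by (simp add: algebra_simps)
  finally have "R + (l + 4) + r * (ln 2 + A + 1/2) \<le> 18 * R * (1 + A)" unfolding Mt_def .
  then have "\<rho> * (R + (l + 4) + r * (ln 2 + A + 1/2)) \<le> \<rho> * (18 * R * (1 + A))"
    using rho by (intro mult_left_mono) auto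
  then show ?thesis unfolding e1 e2 l_def[symmetric] by (simp add: algebra_simps)
qed

lemma part2:
  assumes m: "0 < m" and d: "0 < d" and rho: "0 < \<rho>" and R1: "1 \<le> R" and dl: "0 < \<delta>" "\<delta> < 1"
  shows "measure (init_measure m d)
              {\<omega> \<in> space (init_measure m d).
                 \<forall>(V :: nat \<times> nat \<Rightarrow> real) (x :: nat \<Rightarrow> real).
                   fro_norm m d (\<lambda>jk. V jk - snd \<omega> jk) \<le> R \<longrightarrow> vec_norm d x \<le> 1 \<longrightarrow>
                   \<bar>frob_inner m d (grad_f \<rho> m d (fst \<omega>) (snd \<omega>) x) V\<bar>
                     \<le> 18 * R * \<rho> * ln (exp 1 * real m * real d / \<delta>)}
              \<ge> 1 - (1 + 3 * (real m * real d powr (3/2)) ^ d) * \<delta>"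
proof -
  interpret P: prob_space "init_measure m d" by (rule prob_init)
  define \<Omega> where "\<Omega> = space (init_measure m d)"
  define C where "C = 18 * R * \<rho> * ln (exp 1 * real m * real d / \<delta>)"
  define K where "K = nat \<lceil>sqrt (real m) * real d / 5\<rceil>"
  define c where "c = ln (1/\<delta>) + 4"
  define Mt where "Mt = ln (2 * real m * real d / \<delta>) + 1/2"
  define I where "I = {..<m} \<times> {..<d}"
  define B where "B = real m * real d powr (3/2)"
  have R0: "0 < R" using R1 by simp
  have K0: "0 < K" and Kr: "sqrt (real m) * real d / real K \<le> 5"
    and Kc: "real ((2*K+1)^d) \<le> 6 * B ^ d"
    using card_bound[OF m d] unfolding K_def B_def by auto
  define E where "E = {\<omega> \<in> \<Omega>. \<forall>(V :: nat \<times> nat \<Rightarrow> real) (x :: nat \<Rightarrow> real).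
                   fro_norm m d (\<lambda>jk. V jk - snd \<omega> jk) \<le> R \<longrightarrow> vec_norm d x \<le> 1 \<longrightarrow>
                   \<bar>frob_inner m d (grad_f \<rho> m d (fst \<omega>) (snd \<omega>) x) V\<bar> \<le> C}"
  have E_eq: "E = {\<omega>\<in>\<Omega>. \<forall>J\<in>Pow {..<m}. \<forall>k::nat. \<exists>n::nat. \<forall>y\<in>Dset d. vec_norm d y \<le> 1 \<longrightarrow>
      (\<forall>j\<in>J. - (1 / (real n + 1)) \<le> (\<Sum>i<d. snd \<omega> (j,i) * y i)) \<longrightarrow>
      Phi m d R y (fst \<omega>) (snd \<omega>) J \<le> C * sqrt (real m) / \<rho> + 1 / (real k + 1)}"
    unfolding E_def using E2_char[OF rho m R0] by blast
  have E_sets: "E \<in> sets (init_measure m d)" unfolding E_eq \<Omega>_def by (rule E2_sets)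
  define Bp where "Bp p = {\<omega>\<in>\<Omega>. Mt < \<bar>snd \<omega> p\<bar>}" for p
  define By where "By y = {\<omega>\<in>\<Omega>. c * sqrt (real m) * vec_norm d y < \<bar>Sfun m d y (fst \<omega>) (snd \<omega>)\<bar>}" for y
  define G where "G = {\<omega>\<in>\<Omega>. (\<forall>p\<in>I. \<bar>snd \<omega> p\<bar> \<le> Mt) \<and> (\<forall>y\<in>grid K d. \<bar>Sfun m d y (fst \<omega>) (snd \<omega>)\<bar> \<le> c * sqrt (real m) * vec_norm d y)}"
  have Bp_sets: "Bp p \<in> sets (init_measure m d)" if "p \<in> I" for p
  proof -
    have "(\<lambda>\<omega>. snd \<omega> p) \<in> borel_measurable (init_measure m d)"
      using meas_W[of "fst p" m "snd p" d] that unfolding I_def by auto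
    then show ?thesis unfolding Bp_def \<Omega>_def by (intro sets_ge' borel_measurable_abs)
  qed
  have By_sets: "By y \<in> sets (init_measure m d)" for y
    unfolding By_def \<Omega>_def by (intro sets_ge' borel_measurable_abs meas_S)
  define U1 where "U1 = (\<Union>p\<in>I. Bp p)"
  define U2 where "U2 = (\<Union>y\<in>grid K d. By y)"
  have U1_sets: "U1 \<in> sets (init_measure m d)" unfolding U1_def I_def
    using Bp_sets unfolding I_def by (intro sets.finite_UN) auto
  have U2_sets: "U2 \<in> sets (init_measure m d)" unfolding U2_def
    using By_sets by (intro sets.finite_UN finite_grid) auto
  have GU: "G = \<Omega> - (U1 \<union> U2)" unfolding G_def U1_def U2_def Bp_def By_def by (auto simp: not_less)
  have mU1: "measure (init_measure m d) U1 \<le> \<delta>"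
  proof -
    have "measure (init_measure m d) U1 \<le> (\<Sum>p\<in>I. measure (init_measure m d) (Bp p))"
      unfolding U1_def using Bp_sets by (intro P.finite_measure_subadditive_finite) (auto simp: I_def)
    also have "\<dots> \<le> (\<Sum>p\<in>I. 2 * exp (1/2 - Mt))"
      by (intro sum_mono) (auto simp: Bp_def \<Omega>_def I_def intro!: tail_entry)
    also have "\<dots> = real m * real d * (2 * exp (1/2 - Mt))" unfolding I_def by simp
    also have "exp (1/2 - Mt) = \<delta> / (2 * real m * real d)"
    proof -
      have "1/2 - Mt = - ln (2 * real m * real d / \<delta>)" unfolding Mt_def by simp
      then have "exp (1/2 - Mt) = inverse (2 * real m * real d / \<delta>)"
        using m d dl by (simp add: exp_minus)
      then show ?thesis by simp
    qed
    also have "real m * real d * (2 * (\<delta> / (2 * real m * real d))) = \<delta>" using m d by simp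
    finally show ?thesis .
  qed
  have mU2: "measure (init_measure m d) U2 \<le> 3 * B ^ d * \<delta>"
  proof -
    have "measure (init_measure m d) U2 \<le> (\<Sum>y\<in>grid K d. measure (init_measure m d) (By y))"
      unfolding U2_def using By_sets by (intro P.finite_measure_subadditive_finite finite_grid) auto
    also have "\<dots> \<le> (\<Sum>y\<in>grid K d. 2 * exp (1/2 - c))"
      by (intro sum_mono) (auto simp: By_def \<Omega>_def intro!: tail_S m)
    also have "\<dots> = real (card (grid K d)) * (2 * exp (1/2 - c))" by simp
    also have "2 * exp (1/2 - c) \<le> \<delta> / 2"
    proof -
      have "1/2 - c = ln \<delta> + (- 7/2)" unfolding c_def using dl by (simp add: ln_div)
      then have "exp (1/2 - c) = exp (ln \<delta>) * exp (- 7/2)" by (simp only: mult_exp_exp)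
      then have "exp (1/2 - c) = \<delta> * exp (- 7/2)" using dl by simp
      moreover have "exp (- 7/2) \<le> (1/4 :: real)"
      proof -
        have "4 \<le> exp (7/2::real)" using exp_ge_add_one_self[of "7/2::real"] by simp
        then have "inverse (exp (7/2::real)) \<le> inverse 4" by (intro le_imp_inverse_le) auto
        then show ?thesis by (simp add: exp_minus)
      qed
      ultimately show ?thesis using dl by simp
    qed
    then have "real (card (grid K d)) * (2 * exp (1/2 - c)) \<le> real (card (grid K d)) * (\<delta> / 2)"
      by (intro mult_left_mono) auto
    also have "\<dots> \<le> 6 * B ^ d * (\<delta> / 2)"
    proof (intro mult_right_mono)
      have "card (grid K d) \<le> (2 * K + 1) ^ d" by (rule card_grid)
      then have "real (card (grid K d)) \<le> real ((2 * K + 1) ^ d)" by (rule of_nat_mono)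
      then show "real (card (grid K d)) \<le> 6 * B ^ d" using Kc by linarith
    qed (use dl in auto)
    also have "\<dots> = 3 * B ^ d * \<delta>" by simp
    finally show ?thesis .
  qed
  have mG: "1 - (1 + 3 * B ^ d) * \<delta> \<le> measure (init_measure m d) G"
  proof -
    have "measure (init_measure m d) G = 1 - measure (init_measure m d) (U1 \<union> U2)"
      unfolding GU \<Omega>_def using U1_sets U2_sets by (simp add: P.prob_compl)
    moreover have "measure (init_measure m d) (U1 \<union> U2) \<le> measure (init_measure m d) U1 + measure (init_measure m d) U2"
      using U1_sets U2_sets by (rule measure_Un_le)
    ultimately show ?thesis using mU1 mU2 by (simp add: algebra_simps)
  qed
  have AE: "AE \<omega> in init_measure m d. \<omega> \<in> G \<longrightarrow> \<omega> \<in> E"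
  proof (rule AE_mp[OF AE_init], intro AE_I2 impI)
    fix \<omega> assume a: "\<forall>j\<in>{..<m}. fst \<omega> j \<in> {- 1, 1}" and g: "\<omega> \<in> G"
    have a1: "\<forall>j<m. \<bar>fst \<omega> j\<bar> \<le> 1"
    proof (intro allI impI)
      fix j assume "j < m"
      then have "fst \<omega> j = - 1 \<or> fst \<omega> j = 1" using a by auto
      then show "\<bar>fst \<omega> j\<bar> \<le> 1" by auto
    qed
    have Wb: "\<forall>p\<in>{..<m}\<times>{..<d}. \<bar>snd \<omega> p\<bar> \<le> Mt" using g unfolding G_def I_def by auto
    have net: "\<forall>y\<in>grid K d. \<bar>Sfun m d y (fst \<omega>) (snd \<omega>)\<bar> \<le> c * sqrt (real m) * vec_norm d y"
      using g unfolding G_def by auto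
    have c0: "0 \<le> c" unfolding c_def using dl by simp
    have Mt0: "0 \<le> Mt"
    proof -
      have "1 \<le> 2 * real m * real d / \<delta>"
      proof -
        have "1 * 1 \<le> real m * real d" using m d by (intro mult_mono) auto
        then have "1 \<le> 2 * real m * real d" by simp
        also have "\<dots> \<le> 2 * real m * real d / \<delta>" using dl m d by (simp add: le_divide_eq)
        finally show ?thesis .
      qed
      then show ?thesis unfolding Mt_def by simp
    qed
    have r0: "0 \<le> sqrt (real m) * real d / real K" by simp
    show "\<omega> \<in> E" unfolding E_def
    proof (intro CollectI conjI allI impI)
      show "\<omega> \<in> \<Omega>" using g unfolding G_def by simp
      fix V x assume V: "fro_norm m d (\<lambda>jk. V jk - snd \<omega> jk) \<le> R" and x: "vec_norm d x \<le> 1"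
      have "\<bar>frob_inner m d (grad_f \<rho> m d (fst \<omega>) (snd \<omega>) x) V\<bar>
          \<le> \<rho> * R + \<rho> * c + \<rho> * (sqrt (real m) * real d / real K) * Mt"
        by (rule det2[OF rho m K0 a1 Wb net c0 x V])
      also have "\<dots> \<le> C" unfolding C_def c_def Mt_def
        by (rule final_ineq[OF rho R1 m d dl r0 Kr])
      finally show "\<bar>frob_inner m d (grad_f \<rho> m d (fst \<omega>) (snd \<omega>) x) V\<bar> \<le> C" .
    qed
  qed
  have "measure (init_measure m d) G \<le> measure (init_measure m d) E"
    by (rule P.finite_measure_mono_AE[OF AE E_sets])
  then show ?thesis using mG unfolding E_def \<Omega>_def C_def B_def by simp
qed

theorem lemmaA6:
  fixes m d :: nat and \<rho> R\<^sub>V \<delta> :: real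
  assumes "0 < m" and "0 < d" and "0 < \<rho>"
    and "0 < R\<^sub>V" and "0 < \<delta>" and "\<delta> < 1"
  shows "(\<forall>x :: nat \<Rightarrow> real.
            measure (init_measure m d)
              {\<omega> \<in> space (init_measure m d).
                 \<forall>V :: nat \<times> nat \<Rightarrow> real.
                   \<bar>frob_inner m d (grad_f \<rho> m d (fst \<omega>) (snd \<omega>) x) V\<bar>
                     \<le> \<rho> * vec_norm d x *
                        (fro_norm m d (\<lambda>jk. V jk - snd \<omega> jk) + 2 * ln (1 / \<delta>))}
              \<ge> 1 - 3 * \<delta>)
       \<and> (1 \<le> R\<^sub>V \<longrightarrow> real m \<ge> ln (exp 1 * real m * real d) \<longrightarrow>
            measure (init_measure m d)
              {\<omega> \<in> space (init_measure m d).
                 \<forall>(V :: nat \<times> nat \<Rightarrow> real) (x :: nat \<Rightarrow> real).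
                   fro_norm m d (\<lambda>jk. V jk - snd \<omega> jk) \<le> R\<^sub>V \<longrightarrow> vec_norm d x \<le> 1 \<longrightarrow>
                   \<bar>frob_inner m d (grad_f \<rho> m d (fst \<omega>) (snd \<omega>) x) V\<bar>
                     \<le> 18 * R\<^sub>V * \<rho> * ln (exp 1 * real m * real d / \<delta>)}
              \<ge> 1 - (1 + 3 * (real m * real d powr (3/2)) ^ d) * \<delta>)"
proof (intro conjI allI impI)
  fix x :: "nat \<Rightarrow> real"
  show "measure (init_measure m d)
              {\<omega> \<in> space (init_measure m d).
                 \<forall>V :: nat \<times> nat \<Rightarrow> real.
                   \<bar>frob_inner m d (grad_f \<rho> m d (fst \<omega>) (snd \<omega>) x) V\<bar>
                     \<le> \<rho> * vec_norm d x *
                        (fro_norm m d (\<lambda>jk. V jk - snd \<omega> jk) + 2 * ln (1 / \<delta>))}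
              \<ge> 1 - 3 * \<delta>"
    by (rule part1) (use assms in auto)
next
  assume R1: "1 \<le> R\<^sub>V"
  show "measure (init_measure m d)
              {\<omega> \<in> space (init_measure m d).
                 \<forall>(V :: nat \<times> nat \<Rightarrow> real) (x :: nat \<Rightarrow> real).
                   fro_norm m d (\<lambda>jk. V jk - snd \<omega> jk) \<le> R\<^sub>V \<longrightarrow> vec_norm d x \<le> 1 \<longrightarrow>
                   \<bar>frob_inner m d (grad_f \<rho> m d (fst \<omega>) (snd \<omega>) x) V\<bar>
                     \<le> 18 * R\<^sub>V * \<rho> * ln (exp 1 * real m * real d / \<delta>)}
              \<ge> 1 - (1 + 3 * (real m * real d powr (3/2)) ^ d) * \<delta>"
    by (rule part2) (use assms R1 in auto)
qed

end
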